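(* Let $n\ge0$, let $\alpha$ be a real constant, let $k_1,\dots,k_N$ be distinct positive numbers and $x_{0,1},\dots,x_{0,N}$ real constants, and put $$f_j=\exp\big(k_jx+(-1)^nk_j^{2n+1}t-\tfrac12\alpha t+x_{0,j}\big),\qquad j=1,\dots,N.$$ Define $$u=2\partial^2\ln W_1(f_1,\dots,f_N),\qquad \phi_j=\frac{W_2(f_1,\dots,f_N,f_j)}{W_1(f_1,\dots,f_N)}=\frac{W_2(f_1,\dots,f_{j-1},f_{j+1},\dots,f_N,f_j)}{W_1(f_1,\dots,f_N)},\quad j=1,\dots,N.$$ Then $u,\phi_1,\dots,\phi_N$ is a solution (the $N$-soliton solution) of the $n$-th KdV equation with self-consistent sources of degree $N$ with $\lambda_j=-k_j^2$: $$u_t=\partial\Big[-2b_{n+2}[u]-2\alpha\sum_{j=1}^N\phi_j^2\Big],\qquad \phi_{j,xx}+(-k_j^2+u)\phi_j=0,\ j=1,\dots,N.$$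
   Context: Let $\partial=\partial/\partial x$ and $\partial^{-1}=\int_{-\infty}^x\cdot\,dx$. For a potential $u(x,t)$ let $L=-\frac14\partial^2-u+\frac12\partial^{-1}u_x$, $b_0=0$, $b_1=1$, $b_{k+1}=Lb_k$ ($k\ge1$); write $b_k[u]$. Here $t=t_n$. For functions $g_1,\dots,g_k$: $W_1(g_1,\dots,g_k)=\det F$ with $F_{ij}=\delta_{ij}+\partial^{-1}(g_ig_j)$, $1\le i,j\le k$; and $W_2(g_1,\dots,g_k)=\det G$ with $G_{ij}=\delta_{ij}+\partial^{-1}(g_ig_j)$ for $1\le i\le k-1$, $1\le j\le k$, and $G_{kj}=g_j$ for $1\le j\le k$. *)

theory Defs
  imports "HOL-Analysis.Analysis" "Jordan_Normal_Form.Determinant"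
begin

definition dx :: "(real \<Rightarrow> real \<Rightarrow> real) \<Rightarrow> real \<Rightarrow> real \<Rightarrow> real" where
  "dx F x t = deriv (\<lambda>y. F y t) x"

definition dt :: "(real \<Rightarrow> real \<Rightarrow> real) \<Rightarrow> real \<Rightarrow> real \<Rightarrow> real" where
  "dt F x t = deriv (\<lambda>s. F x s) t"

text \<open>The inverse of the x-derivative: integral from minus infinity to x.\<close>
definition dinv :: "(real \<Rightarrow> real \<Rightarrow> real) \<Rightarrow> real \<Rightarrow> real \<Rightarrow> real" where
  "dinv F x t = integral {..x} (\<lambda>y. F y t)"

definition Lop :: "(real \<Rightarrow> real \<Rightarrow> real) \<Rightarrow> (real \<Rightarrow> real \<Rightarrow> real) \<Rightarrow> real \<Rightarrow> real \<Rightarrow> real" where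
  "Lop u b x t = - (1/4) * dx (dx b) x t - u x t * b x t
                 + (1/2) * dinv (\<lambda>y s. dx u y s * b y s) x t"

fun bseq :: "(real \<Rightarrow> real \<Rightarrow> real) \<Rightarrow> nat \<Rightarrow> real \<Rightarrow> real \<Rightarrow> real" where
  "bseq u 0 = (\<lambda>x t. 0)"
| "bseq u (Suc 0) = (\<lambda>x t. 1)"
| "bseq u (Suc (Suc k)) = Lop u (bseq u (Suc k))"

definition W1 :: "(real \<Rightarrow> real \<Rightarrow> real) list \<Rightarrow> real \<Rightarrow> real \<Rightarrow> real" where
  "W1 gs x t = Determinant.det (mat (length gs) (length gs)
      (\<lambda>(i,j). (if i = j then 1 else 0) + dinv (\<lambda>y s. (gs ! i) y s * (gs ! j) y s) x t))"

definition W2 :: "(real \<Rightarrow> real \<Rightarrow> real) list \<Rightarrow> real \<Rightarrow> real \<Rightarrow> real" where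
  "W2 gs x t = Determinant.det (mat (length gs) (length gs)
      (\<lambda>(i,j). if i < length gs - 1
               then (if i = j then 1 else 0) + dinv (\<lambda>y s. (gs ! i) y s * (gs ! j) y s) x t
               else (gs ! j) x t))"

end

theory Submission
  imports Defs "HOL-Real_Asymp.Real_Asymp"
begin

lemma det_mat_expand:
  "det (mat n n (\<lambda>(i,j). B i j)) = (\<Sum>p\<in>{p. p permutes {0..<n}}. signof p * (\<Prod>i=0..<n. B i (p i)))"
proof -
  have "det (mat n n (\<lambda>(i,j). B i j)) = (\<Sum>p\<in>{p. p permutes {0..<n}}. signof p * (\<Prod>i=0..<n. mat n n (\<lambda>(i,j). B i j) $$ (i, p i)))"
    by (rule det_def') simp
  also have "\<dots> = (\<Sum>p\<in>{p. p permutes {0..<n}}. signof p * (\<Prod>i=0..<n. B i (p i)))"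
  proof (rule sum.cong[OF refl])
    fix p assume "p \<in> {p. p permutes {0..<n}}"
    then have "p i < n" if "i < n" for i using that permutes_in_image[of p "{0..<n}" i] by auto
    then show "signof p * (\<Prod>i=0..<n. mat n n (\<lambda>(i,j). B i j) $$ (i, p i)) = signof p * (\<Prod>i=0..<n. B i (p i))"
      by (intro arg_cong[where f="\<lambda>x. signof p * x"] prod.cong) auto
  qed
  finally show ?thesis .
qed

lemma prod_if_one:
  fixes a a' :: "nat \<Rightarrow> real"
  assumes "r < n"
  shows "(\<Prod>i=0..<n. (if i = r then a' i else a i)) = a' r * (\<Prod>j\<in>{0..<n}-{r}. a j)"
proof -
  have "(\<Prod>i=0..<n. (if i = r then a' i else a i)) = 
     (if r = r then a' r else a r) * (\<Prod>i\<in>{0..<n}-{r}. (if i = r then a' i else a i))"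
    using assms by (subst prod.remove[of _ r]) auto
  also have "\<dots> = a' r * (\<Prod>j\<in>{0..<n}-{r}. a j)" by (simp add: prod.cong[of _ _ "\<lambda>i. (if i = r then a' i else a i)" a])
  finally show ?thesis .
qed

lemma det_deriv:
  fixes A :: "nat \<Rightarrow> nat \<Rightarrow> real \<Rightarrow> real"
  assumes d: "\<And>i j. i < n \<Longrightarrow> j < n \<Longrightarrow> ((A i j) has_real_derivative A' i j) (at s)"
  shows "((\<lambda>s. det (mat n n (\<lambda>(i,j). A i j s))) has_real_derivative
     (\<Sum>r<n. det (mat n n (\<lambda>(i,j). if i = r then A' i j else A i j s)))) (at s)"
proof -
  let ?P = "{p. p permutes {0..<n}}"
  have pin: "p i < n" if "p \<in> ?P" "i < n" for p i
    using that permutes_in_image[of p "{0..<n}" i] by auto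
  have "((\<lambda>s. \<Sum>p\<in>?P. signof p * (\<Prod>i=0..<n. A i (p i) s)) has_real_derivative
      (\<Sum>p\<in>?P. signof p * (\<Sum>i\<in>{0..<n}. A' i (p i) * (\<Prod>j\<in>{0..<n}-{i}. A j (p j) s)))) (at s)"
    apply (intro DERIV_sum DERIV_cmult has_field_derivative_prod)
    apply (rule d)
    using pin by auto
  also have "(\<Sum>p\<in>?P. signof p * (\<Sum>i\<in>{0..<n}. A' i (p i) * (\<Prod>j\<in>{0..<n}-{i}. A j (p j) s)))
     = (\<Sum>p\<in>?P. \<Sum>r<n. signof p * (\<Prod>i=0..<n. (if i = r then A' i (p i) else A i (p i) s)))"
    apply (rule sum.cong[OF refl])
    apply (simp only: sum_distrib_left lessThan_atLeast0)
    apply (rule sum.cong[OF refl])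
    subgoal for p r using prod_if_one[of r n "\<lambda>i. A' i (p i)" "\<lambda>i. A i (p i) s"] by simp
    done
  also have "\<dots> = (\<Sum>r<n. \<Sum>p\<in>?P. signof p * (\<Prod>i=0..<n. (if i = r then A' i (p i) else A i (p i) s)))"
    by (rule sum.swap)
  also have "\<dots> = (\<Sum>r<n. det (mat n n (\<lambda>(i,j). if i = r then A' i j else A i j s)))"
    apply (rule sum.cong[OF refl])
    apply (subst det_mat_expand)
    apply (rule sum.cong[OF refl])
    by (simp add: if_distrib)
  finally show ?thesis
    unfolding det_mat_expand .
qed

lemma seq_to_bot: "((\<lambda>n. H (x - real n)) \<longlonglongrightarrow> 0)" if "(H \<longlongrightarrow> (0::real)) at_bot" for H :: "real \<Rightarrow> real"
proof -
  have "filterlim (\<lambda>n. x - real n) at_bot sequentially"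
    unfolding filterlim_uminus_at_bot
    using filterlim_tendsto_add_at_top[OF tendsto_const[of "-x"] filterlim_real_sequentially]
    by simp
  then show ?thesis using filterlim_compose[OF that] by blast
qed

lemma restr_int:
  fixes g H :: "real \<Rightarrow> real"
  assumes d: "\<And>y. y \<le> x \<Longrightarrow> (H has_real_derivative g y) (at y)"
  shows "((\<lambda>y. if y \<in> {x - real n..x} then g y else 0) has_integral (H x - H (x - real n))) {..x}"
proof -
  have "(g has_integral (H x - H (x - real n))) {x - real n..x}"
    apply (rule fundamental_theorem_of_calculus)
    using d by (auto simp: has_real_derivative_iff_has_vector_derivative[symmetric] intro: DERIV_subset)
  then show ?thesis by (subst has_integral_restrict) auto
qed

lemma ftc_minf_nonneg:
  fixes g H :: "real \<Rightarrow> real"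
  assumes d: "\<And>y. y \<le> x \<Longrightarrow> (H has_real_derivative g y) (at y)"
    and nn: "\<And>y. y \<le> x \<Longrightarrow> g y \<ge> 0" and lim: "(H \<longlongrightarrow> 0) at_bot"
  shows "(g has_integral H x) {..x}"
proof (rule has_integral_monotone_convergence_increasing)
  show "((\<lambda>y. if y \<in> {x - real n..x} then g y else 0) has_integral (H x - H (x - real n))) {..x}" for n
    by (rule restr_int[OF d])
  show "(if y \<in> {x - real n..x} then g y else 0) \<le> (if y \<in> {x - real (Suc n)..x} then g y else 0)"
    if "y \<in> {..x}" for n y using that nn by auto
  show "(\<lambda>n. if y \<in> {x - real n..x} then g y else 0) \<longlonglongrightarrow> g y" if "y \<in> {..x}" for y
  proof (rule tendsto_eventually)
    obtain m :: nat where "x - y \<le> real m" using real_arch_simple by blast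
    then show "\<forall>\<^sub>F n in sequentially. (if y \<in> {x - real n..x} then g y else 0) = g y"
      using that by (auto simp: eventually_sequentially intro!: exI[of _ m])
  qed
  show "(\<lambda>n. H x - H (x - real n)) \<longlonglongrightarrow> H x"
    using tendsto_diff[OF tendsto_const seq_to_bot[OF lim]] by simp
qed

lemma ftc_minf:
  fixes g H h :: "real \<Rightarrow> real"
  assumes d: "\<And>y. y \<le> x \<Longrightarrow> (H has_real_derivative g y) (at y)"
    and b: "\<And>y. y \<le> x \<Longrightarrow> \<bar>g y\<bar> \<le> h y" and hi: "h integrable_on {..x}"
    and lim: "(H \<longlongrightarrow> 0) at_bot"
  shows "(g has_integral H x) {..x}"
proof -
  let ?f = "\<lambda>n y. if y \<in> {x - real n..x} then g y else 0"
  have fi: "\<And>n. ?f n integrable_on {..x}" using restr_int[OF d] by blast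
  have le: "norm (?f n y) \<le> h y" if "y \<in> {..x}" for n y
    using b[of y] that by (auto intro: order_trans[OF _ b[of y]])
  have conv: "(\<lambda>n. ?f n y) \<longlonglongrightarrow> g y" if "y \<in> {..x}" for y
  proof (rule tendsto_eventually)
    obtain m :: nat where "x - y \<le> real m" using real_arch_simple by blast
    then show "\<forall>\<^sub>F n in sequentially. ?f n y = g y"
      using that by (auto simp: eventually_sequentially intro!: exI[of _ m])
  qed
  note dc = dominated_convergence[OF fi hi le conv]
  have "(\<lambda>n. integral {..x} (?f n)) = (\<lambda>n. H x - H (x - real n))"
    using restr_int[OF d] by (auto intro: integral_unique)
  with dc(2) have "(\<lambda>n. H x - H (x - real n)) \<longlonglongrightarrow> integral {..x} g" by simp
  moreover have "(\<lambda>n. H x - H (x - real n)) \<longlonglongrightarrow> H x"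
    using tendsto_diff[OF tendsto_const seq_to_bot[OF lim]] by simp
  ultimately have "integral {..x} g = H x" using LIMSEQ_unique by blast
  with dc(1) show ?thesis using integrable_integral by fastforce
qed

lemma exp_int_minf:
  fixes a b x :: real assumes "a > 0"
  shows "((\<lambda>y. exp (a * y + b)) has_integral exp (a * x + b) / a) {..x}"
proof (rule ftc_minf_nonneg[where H = "\<lambda>y. exp (a * y + b) / a"])
  show "((\<lambda>y. exp (a * y + b) / a) has_real_derivative exp (a * y + b)) (at y)" for y
    using assms by (auto intro!: derivative_eq_intros)
  show "((\<lambda>y. exp (a * y + b) / a) \<longlongrightarrow> 0) at_bot"
    using assms by real_asymp
qed auto

lemma cauchy_psd:
  fixes k w :: "nat \<Rightarrow> real"
  assumes kpos: "\<And>j. j < N \<Longrightarrow> k j > 0"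
  shows "(\<Sum>i<N. \<Sum>j<N. w i * w j / (k i + k j)) \<ge> 0"
proof -
  have "((\<lambda>y. \<Sum>i<N. \<Sum>j<N. w i * w j * exp ((k i + k j) * y + 0)) has_integral
        (\<Sum>i<N. \<Sum>j<N. w i * w j * (exp ((k i + k j) * 0 + 0) / (k i + k j)))) {..0}"
    by (intro has_integral_sum finite_lessThan has_integral_mult_right exp_int_minf)
       (auto intro: add_pos_pos kpos)
  moreover have "(\<Sum>i<N. \<Sum>j<N. w i * w j * exp ((k i + k j) * y + 0)) = (\<Sum>i<N. w i * exp (k i * y))\<^sup>2" for y
  proof -
    have "exp ((k i + k j) * y + 0) = exp (k i * y) * exp (k j * y)" for i j
      by (simp add: distrib_right exp_add)
    then show ?thesis by (simp add: power2_eq_square sum_product mult_ac)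
  qed
  ultimately have "((\<lambda>y. (\<Sum>i<N. w i * exp (k i * y))\<^sup>2) has_integral
        (\<Sum>i<N. \<Sum>j<N. w i * w j / (k i + k j))) {..0}" by simp
  then show ?thesis by (rule has_integral_nonneg) auto
qed

definition Mf :: "(nat \<Rightarrow> real) \<Rightarrow> (nat \<Rightarrow> real) \<Rightarrow> nat \<Rightarrow> nat \<Rightarrow> real" where
  "Mf k e i j = (if i = j then 1 else 0) + e i * e j / (k i + k j)"

lemma quad_ge:
  fixes k e z :: "nat \<Rightarrow> real"
  assumes kpos: "\<And>j. j < N \<Longrightarrow> k j > 0"
  shows "(\<Sum>i<N. \<Sum>j<N. z i * Mf k e i j * z j) \<ge> (\<Sum>i<N. (z i)\<^sup>2)"
proof -
  have a: "z i * Mf k e i j * z j = (if i = j then (z i)\<^sup>2 else 0) + (z i * e i) * (z j * e j) / (k i + k j)" for i j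
    by (simp add: Mf_def power2_eq_square algebra_simps)
  have b: "(\<Sum>j<N. (if i = j then (z i)\<^sup>2 else 0)) = (if i < N then (z i)\<^sup>2 else 0)" for i
    by (simp add: sum.delta')
  have "(\<Sum>i<N. \<Sum>j<N. z i * Mf k e i j * z j) = (\<Sum>i<N. (z i)\<^sup>2) + 
     (\<Sum>i<N. \<Sum>j<N. (z i * e i) * (z j * e j) / (k i + k j))"
    unfolding a sum.distrib b by simp
  then show ?thesis using cauchy_psd[OF kpos, where w="\<lambda>i. z i * e i"] by simp
qed

lemma Mf_sym: "Mf k e i j = Mf k e j i"
  by (simp add: Mf_def mult_ac add.commute)

lemma sol_bound:
  fixes k e z y :: "nat \<Rightarrow> real"
  assumes kpos: "\<And>j. j < N \<Longrightarrow> k j > 0"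
    and eq: "\<And>i. i < N \<Longrightarrow> (\<Sum>j<N. Mf k e i j * z j) = y i"
  shows "(\<Sum>i<N. (z i)\<^sup>2) \<le> (\<Sum>i<N. (y i)\<^sup>2)"
proof -
  have "(\<Sum>i<N. (z i)\<^sup>2) \<le> (\<Sum>i<N. \<Sum>j<N. z i * Mf k e i j * z j)" by (rule quad_ge[OF kpos])
  also have "\<dots> = (\<Sum>i<N. z i * y i)"
    by (rule sum.cong[OF refl]) (simp add: eq[symmetric] sum_distrib_left mult_ac)
  also have "\<dots> \<le> (\<Sum>i<N. ((z i)\<^sup>2 + (y i)\<^sup>2) / 2)"
  proof (rule sum_mono)
    fix i
    have "0 \<le> (z i - y i)\<^sup>2" by simp
    then show "z i * y i \<le> ((z i)\<^sup>2 + (y i)\<^sup>2) / 2" unfolding power2_diff by simp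
  qed
  also have "\<dots> = (\<Sum>i<N. (z i)\<^sup>2) / 2 + (\<Sum>i<N. (y i)\<^sup>2) / 2"
    by (simp add: sum.distrib sum_divide_distrib add_divide_distrib)
  finally show ?thesis by simp
qed

lemma sol_unique:
  fixes k e z z' :: "nat \<Rightarrow> real"
  assumes kpos: "\<And>j. j < N \<Longrightarrow> k j > 0"
    and eq: "\<And>i. i < N \<Longrightarrow> (\<Sum>j<N. Mf k e i j * z j) = (\<Sum>j<N. Mf k e i j * z' j)"
    and j: "j < N"
  shows "z j = z' j"
proof -
  have "(\<Sum>i<N. (z i - z' i)\<^sup>2) \<le> (\<Sum>i<N. (0::real)\<^sup>2)"
  proof (rule sol_bound[OF kpos, where e=e])
    fix i assume "i < N"
    from eq[OF this] show "(\<Sum>j<N. Mf k e i j * (z j - z' j)) = 0"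
      by (simp add: right_diff_distrib sum_subtractf)
  qed
  then have "(\<Sum>i<N. (z i - z' i)\<^sup>2) = 0" using sum_nonneg[of "{..<N}" "\<lambda>i. (z i - z' i)\<^sup>2"] by simp
  then have "(z j - z' j)\<^sup>2 = 0" using j by (subst (asm) sum_nonneg_eq_0_iff) auto
  then show ?thesis by simp
qed

lemma mat_vec_sum:
  assumes "A \<in> carrier_mat n n" "v \<in> carrier_vec n" "i < n"
  shows "(A *\<^sub>v v) $ i = (\<Sum>j<n. A $$ (i,j) * v $ j)"
  using assms by (simp add: scalar_prod_def lessThan_atLeast0)

lemma cramer_solve:
  fixes A :: "real mat"
  assumes A: "A \<in> carrier_mat n n" and d: "det A \<noteq> 0" and i: "i < n"
  shows "(\<Sum>j<n. A $$ (i,j) * (det (replace_col A (vec n y) j) / det A)) = y i"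
proof -
  define B where "B = (1 / det A) \<cdot>\<^sub>m adj_mat A"
  have Bc: "B \<in> carrier_mat n n" using adj_mat(1)[OF A] by (simp add: B_def)
  have sm: "(1 / det A) \<cdot>\<^sub>m (det A \<cdot>\<^sub>m 1\<^sub>m n) = 1\<^sub>m n"
    by (rule eq_matI) (use d in auto)
  have AB: "A * B = 1\<^sub>m n"
    unfolding B_def using adj_mat[OF A] A d sm by (simp add: mult_smult_distrib)
  define x where "x = B *\<^sub>v vec n y"
  have xc: "x \<in> carrier_vec n" using Bc by (simp add: x_def)
  have Ax: "A *\<^sub>v x = vec n y"
    unfolding x_def using A Bc by (simp add: assoc_mult_mat_vec[symmetric, of A n n B n] AB)
  have xj: "x $ j = det (replace_col A (vec n y) j) / det A" if "j < n" for j
    using cramer_lemma_mat[OF A xc that] d by (simp add: Ax)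
  have "y i = (A *\<^sub>v x) $ i" using Ax i by simp
  also have "\<dots> = (\<Sum>j<n. A $$ (i,j) * x $ j)" by (rule mat_vec_sum[OF A xc i])
  also have "\<dots> = (\<Sum>j<n. A $$ (i,j) * (det (replace_col A (vec n y) j) / det A))"
    by (rule sum.cong) (auto simp: xj)
  finally show ?thesis by simp
qed

definition MM :: "nat \<Rightarrow> (nat \<Rightarrow> real) \<Rightarrow> (nat \<Rightarrow> real) \<Rightarrow> real mat" where
  "MM N k e = mat N N (\<lambda>(i,j). Mf k e i j)"
definition tauv :: "nat \<Rightarrow> (nat \<Rightarrow> real) \<Rightarrow> (nat \<Rightarrow> real) \<Rightarrow> real" where
  "tauv N k e = det (MM N k e)"
definition solv :: "nat \<Rightarrow> (nat \<Rightarrow> real) \<Rightarrow> (nat \<Rightarrow> real) \<Rightarrow> (nat \<Rightarrow> real) \<Rightarrow> nat \<Rightarrow> real" where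
  "solv N k e y i = det (replace_col (MM N k e) (vec N y) i) / tauv N k e"

lemma MM_carrier[simp]: "MM N k e \<in> carrier_mat N N" by (simp add: MM_def)

lemma tau_nonzero:
  fixes k e :: "nat \<Rightarrow> real"
  assumes kpos: "\<And>j. j < N \<Longrightarrow> k j > 0"
  shows "tauv N k e \<noteq> 0"
proof
  assume "tauv N k e = 0"
  then obtain v where v: "v \<in> carrier_vec N" "v \<noteq> 0\<^sub>v N" "MM N k e *\<^sub>v v = 0\<^sub>v N"
    unfolding tauv_def using det_0_iff_vec_prod_zero[OF MM_carrier] by blast
  have "v $ j = (\<lambda>_. 0) j" if "j < N" for j
  proof (rule sol_unique[OF kpos _ that, where e=e])
    fix i assume i: "i < N"
    have "(\<Sum>j<N. Mf k e i j * v $ j) = (MM N k e *\<^sub>v v) $ i"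
      using mat_vec_sum[OF MM_carrier v(1) i] i by (simp add: MM_def)
    also have "\<dots> = 0" using v(3) i by simp
    finally show "(\<Sum>j<N. Mf k e i j * v $ j) = (\<Sum>j<N. Mf k e i j * 0)" by simp
  qed
  then have "v = 0\<^sub>v N" using v(1) by (intro eq_vecI) auto
  with v(2) show False by simp
qed

lemma tau_pos:
  fixes k e :: "nat \<Rightarrow> real"
  assumes kpos: "\<And>j. j < N \<Longrightarrow> k j > 0"
  shows "tauv N k e > 0"
proof (rule ccontr)
  assume neg: "\<not> tauv N k e > 0"
  define g where "g s = det (mat N N (\<lambda>(i,j). (if i = j then 1 else 0) + s * (e i * e j / (k i + k j))))" for s :: real
  have gs: "g s = tauv N k (\<lambda>i. sqrt s * e i)" if "s \<ge> 0" for s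
  proof -
    have eq: "s * (e i * e j / (k i + k j)) = sqrt s * e i * (sqrt s * e j) / (k i + k j)" for i j
      using that by (simp add: mult_ac real_sqrt_mult_self)
    show ?thesis
      unfolding g_def tauv_def MM_def Mf_def eq ..
  qed
  have g0: "g 0 = 1"
  proof -
    have "mat N N (\<lambda>(i,j). (if i = j then 1 else 0) + 0 * (e i * e j / (k i + k j))) = (1\<^sub>m N :: real mat)"
      by (rule eq_matI) auto
    then show ?thesis unfolding g_def by simp
  qed
  have g1: "g 1 = tauv N k e" using gs[of 1] by simp
  have cont: "isCont g s" for s
  proof -
    have "(g has_real_derivative (\<Sum>r<N. det (mat N N (\<lambda>(i,j). if i = r then (e i * e j / (k i + k j)) else
        (if i = j then 1 else 0) + s * (e i * e j / (k i + k j)))))) (at s)"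
      unfolding g_def
      by (rule det_deriv[where A = "\<lambda>i j s. (if i = j then 1 else 0) + s * (e i * e j / (k i + k j))"])
         (auto intro!: derivative_eq_intros, (smt (verit) kpos)+)
    then show ?thesis by (rule DERIV_isCont)
  qed
  obtain s where s: "0 \<le> s" "s \<le> 1" "g s = 0"
    using IVT2[of g 1 0 0] g0 g1 neg cont by auto
  then show False using gs[of s] tau_nonzero[OF kpos] by simp
qed

lemma solv_eq:
  fixes k e y :: "nat \<Rightarrow> real"
  assumes kpos: "\<And>j. j < N \<Longrightarrow> k j > 0" and i: "i < N"
  shows "(\<Sum>j<N. Mf k e i j * solv N k e y j) = y i"
  using cramer_solve[OF MM_carrier tau_nonzero[OF kpos, unfolded tauv_def] i, where y=y]
  using i by (simp add: solv_def tauv_def MM_def)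

lemma replace_col_MM: "replace_col (MM N k e) (vec N y) i = mat N N (\<lambda>(r,c). if c = i then y r else Mf k e r c)"
  by (rule eq_matI) (auto simp: replace_col_def MM_def)

lemma Mf_deriv:
  assumes "((\<lambda>s. e s i) has_real_derivative a i * e sx i) (at sx)"
    "((\<lambda>s. e s j) has_real_derivative a j * e sx j) (at sx)"
  shows "((\<lambda>s. Mf k (e s) i j) has_real_derivative (a i + a j) * (e sx i * e sx j) / (k i + k j)) (at sx)"
proof -
  have "((\<lambda>s. e s i * e s j) has_real_derivative (a i * e sx i) * e sx j + (a j * e sx j) * e sx i) (at sx)"
    by (rule DERIV_mult[OF assms])
  then have "((\<lambda>s. e s i * e s j / (k i + k j)) has_real_derivative ((a i * e sx i) * e sx j + (a j * e sx j) * e sx i) / (k i + k j)) (at sx)"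
    by (rule DERIV_cdivide)
  then have "((\<lambda>s. (if i = j then 1 else 0) + e s i * e s j / (k i + k j)) has_real_derivative 0 + ((a i * e sx i) * e sx j + (a j * e sx j) * e sx i) / (k i + k j)) (at sx)"
    by (intro DERIV_add DERIV_const)
  moreover have eq: "0 + ((a i * e sx i) * e sx j + (a j * e sx j) * e sx i) / (k i + k j) = (a i + a j) * (e sx i * e sx j) / (k i + k j)"
    by (simp add: algebra_simps add_divide_distrib)
  ultimately show ?thesis unfolding Mf_def by metis
qed

lemma solv_differentiable:
  fixes k a :: "nat \<Rightarrow> real" and e y :: "real \<Rightarrow> nat \<Rightarrow> real"
  assumes kpos: "\<And>j. j < N \<Longrightarrow> k j > 0"
    and ed: "\<And>j. j < N \<Longrightarrow> ((\<lambda>s. e s j) has_real_derivative a j * e sx j) (at sx)"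
    and yd: "\<And>j. j < N \<Longrightarrow> ((\<lambda>s. y s j) has_real_derivative y' j) (at sx)"
  shows "\<exists>D. ((\<lambda>s. solv N k (e s) (y s) i) has_real_derivative D) (at sx)"
proof -
  have "\<exists>D1. ((\<lambda>s. det (mat N N (\<lambda>(r,c). (\<lambda>r c s. if c = i then y s r else Mf k (e s) r c) r c s))) has_real_derivative D1) (at sx)"
    apply (rule exI)
    apply (rule det_deriv[where A' = "\<lambda>r c. if c = i then y' r else (a r + a c) * (e sx r * e sx c) / (k r + k c)"])
    subgoal for r c by (cases "c = i") (auto intro: yd Mf_deriv ed)
    done
  then obtain D1 where D1: "((\<lambda>s. det (mat N N (\<lambda>(r,c). if c = i then y s r else Mf k (e s) r c))) has_real_derivative D1) (at sx)"
    by auto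
  have "\<exists>D2. ((\<lambda>s. det (mat N N (\<lambda>(r,c). (\<lambda>r c s. Mf k (e s) r c) r c s))) has_real_derivative D2) (at sx)"
    apply (rule exI)
    apply (rule det_deriv[where A' = "\<lambda>r c. (a r + a c) * (e sx r * e sx c) / (k r + k c)"])
    subgoal for r c by (auto intro: Mf_deriv ed)
    done
  then obtain D2 where D2: "((\<lambda>s. det (mat N N (\<lambda>(r,c). Mf k (e s) r c))) has_real_derivative D2) (at sx)"
    by auto
  have "tauv N k (e sx) \<noteq> 0" by (rule tau_nonzero[OF kpos])
  then show ?thesis
    unfolding solv_def tauv_def replace_col_MM unfolding MM_def
    using DERIV_divide[OF D1 D2] by blast
qed

lemma solv_deriv:
  fixes k a :: "nat \<Rightarrow> real" and e y :: "real \<Rightarrow> nat \<Rightarrow> real"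
  assumes kpos: "\<And>j. j < N \<Longrightarrow> k j > 0"
    and ed: "\<And>j. j < N \<Longrightarrow> ((\<lambda>s. e s j) has_real_derivative a j * e sx j) (at sx)"
    and yd: "\<And>j. j < N \<Longrightarrow> ((\<lambda>s. y s j) has_real_derivative y' j) (at sx)"
    and i: "i < N"
  shows "((\<lambda>s. solv N k (e s) (y s) i) has_real_derivative
     solv N k (e sx) (\<lambda>r. y' r - (\<Sum>j<N. (a r + a j) * (e sx r * e sx j / (k r + k j)) * solv N k (e sx) (y sx) j)) i) (at sx)"
proof -
  define z where "z s j = solv N k (e s) (y s) j" for s j
  have "\<exists>D. ((\<lambda>s. z s j) has_real_derivative D) (at sx)" for j
    unfolding z_def using kpos ed yd by (rule solv_differentiable)
  then have "\<forall>j. \<exists>D. j < N \<longrightarrow> ((\<lambda>s. z s j) has_real_derivative D) (at sx)" by blast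
  then obtain Dz where Dz: "\<And>j. j < N \<Longrightarrow> ((\<lambda>s. z s j) has_real_derivative Dz j) (at sx)"
    by metis
  have eqD: "(\<Sum>j<N. Mf k (e sx) r j * Dz j) = y' r - (\<Sum>j<N. (a r + a j) * (e sx r * e sx j / (k r + k j)) * z sx j)"
    if r: "r < N" for r
  proof -
    have dj: "((\<lambda>s. Mf k (e s) r j * z s j) has_real_derivative
        ((a r + a j) * (e sx r * e sx j) / (k r + k j)) * z sx j + Dz j * Mf k (e sx) r j) (at sx)" if j: "j < N" for j
      by (rule DERIV_mult[OF Mf_deriv[OF ed[OF r] ed[OF j]] Dz[OF j]])
    have "((\<lambda>s. \<Sum>j<N. Mf k (e s) r j * z s j) has_real_derivative
        (\<Sum>j<N. ((a r + a j) * (e sx r * e sx j) / (k r + k j)) * z sx j + Dz j * Mf k (e sx) r j)) (at sx)"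
      by (rule DERIV_sum) (use dj in auto)
    moreover have "(\<lambda>s. \<Sum>j<N. Mf k (e s) r j * z s j) = (\<lambda>s. y s r)"
      unfolding z_def using solv_eq[OF kpos r] by simp
    ultimately have "((\<lambda>s. y s r) has_real_derivative
        (\<Sum>j<N. ((a r + a j) * (e sx r * e sx j) / (k r + k j)) * z sx j + Dz j * Mf k (e sx) r j)) (at sx)" by simp
    from DERIV_unique[OF this yd[OF r]] show ?thesis by (simp add: sum.distrib mult_ac)
  qed
  have "Dz i = solv N k (e sx) (\<lambda>r. y' r - (\<Sum>j<N. (a r + a j) * (e sx r * e sx j / (k r + k j)) * z sx j)) i"
  proof (rule sol_unique[OF kpos _ i, where e = "e sx"])
    fix r assume r: "r < N"
    show "(\<Sum>j<N. Mf k (e sx) r j * Dz j) = (\<Sum>j<N. Mf k (e sx) r j * solv N k (e sx) (\<lambda>r. y' r - (\<Sum>j<N. (a r + a j) * (e sx r * e sx j / (k r + k j)) * z sx j)) j)"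
      unfolding eqD[OF r] by (rule solv_eq[OF kpos r, symmetric])
  qed
  with Dz[OF i] show ?thesis unfolding z_def by simp
qed

definition Mv :: "nat \<Rightarrow> (nat \<Rightarrow> real) \<Rightarrow> (nat \<Rightarrow> real) \<Rightarrow> (nat \<Rightarrow> real) \<Rightarrow> nat \<Rightarrow> real" where
  "Mv N k e z r = (\<Sum>j<N. Mf k e r j * z j)"

lemma Mv_sym: "(\<Sum>r<N. x r * Mv N k e y r) = (\<Sum>r<N. Mv N k e x r * y r)"
  unfolding Mv_def sum_distrib_left sum_distrib_right
  by (subst sum.swap) (simp add: Mf_sym mult_ac)

lemma Mv_solv: "(\<And>j. j < N \<Longrightarrow> k j > 0) \<Longrightarrow> r < N \<Longrightarrow> Mv N k e (solv N k e y) r = y r"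
  unfolding Mv_def by (rule solv_eq)

lemma Mv_unique: "(\<And>j. j < N \<Longrightarrow> k j > 0) \<Longrightarrow> (\<And>r. r < N \<Longrightarrow> Mv N k e z r = Mv N k e z' r) \<Longrightarrow> j < N \<Longrightarrow> z j = z' j"
  unfolding Mv_def by (rule sol_unique)

lemma Mv_add: "Mv N k e (\<lambda>j. z j + z' j) r = Mv N k e z r + Mv N k e z' r"
  unfolding Mv_def by (simp add: distrib_left sum.distrib)

lemma Mv_diff: "Mv N k e (\<lambda>j. z j - z' j) r = Mv N k e z r - Mv N k e z' r"
  unfolding Mv_def by (simp add: right_diff_distrib sum_subtractf)

lemma Mv_cmult: "Mv N k e (\<lambda>j. c * z j) r = c * Mv N k e z r"
  unfolding Mv_def by (simp add: sum_distrib_left mult_ac)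

lemma Mv_expand: assumes "r < N" shows "Mv N k e z r = z r + (\<Sum>j<N. e r * e j / (k r + k j) * z j)"
proof -
  have a: "Mf k e r j * z j = (if r = j then z j else 0) + e r * e j / (k r + k j) * z j" for j
    by (simp add: Mf_def distrib_right)
  show ?thesis unfolding Mv_def a sum.distrib using assms by (simp add: sum.delta)
qed

lemma dir_char:
  fixes k e a :: "nat \<Rightarrow> real"
  assumes kpos: "\<And>j. j < N \<Longrightarrow> k j > 0" and r: "r < N"
  defines "\<phi> \<equiv> solv N k e e"
  defines "z \<equiv> solv N k e (\<lambda>r. a r * e r - (\<Sum>j<N. (a r + a j) * (e r * e j / (k r + k j)) * \<phi> j))"
  shows "Mv N k e (\<lambda>j. z j + a j * \<phi> j) r = 2 * a r * \<phi> r"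
proof -
  define T where "T = (\<Sum>j<N. e r * e j / (k r + k j) * \<phi> j)"
  define U where "U = (\<Sum>j<N. e r * e j / (k r + k j) * (a j * \<phi> j))"
  have p: "\<phi> r + T = e r"
    using Mv_solv[OF kpos r, where e=e and y=e] Mv_expand[OF r] unfolding \<phi>_def T_def by simp
  have aT: "a r * T = a r * e r - a r * \<phi> r" using p[symmetric] by (simp add: algebra_simps)
  have "Mv N k e (\<lambda>j. z j + a j * \<phi> j) r = Mv N k e z r + Mv N k e (\<lambda>j. a j * \<phi> j) r"
    by (rule Mv_add)
  also have "Mv N k e z r = a r * e r - (\<Sum>j<N. (a r + a j) * (e r * e j / (k r + k j)) * \<phi> j)"
    unfolding z_def by (rule Mv_solv[OF kpos r])
  also have "Mv N k e (\<lambda>j. a j * \<phi> j) r = a r * \<phi> r + U"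
    unfolding U_def by (rule Mv_expand[OF r])
  also have "(\<Sum>j<N. (a r + a j) * (e r * e j / (k r + k j)) * \<phi> j) = a r * T + U"
    unfolding T_def U_def sum_distrib_left sum.distrib[symmetric] by (rule sum.cong) (simp_all add: algebra_simps add_divide_distrib)
  finally show ?thesis using aT by linarith
qed

lemma S_deriv_alg:
  fixes k e a :: "nat \<Rightarrow> real"
  assumes kpos: "\<And>j. j < N \<Longrightarrow> k j > 0"
  defines "\<phi> \<equiv> solv N k e e"
  assumes zc: "\<And>r. r < N \<Longrightarrow> Mv N k e (\<lambda>j. z j + a j * \<phi> j) r = 2 * a r * \<phi> r"
  shows "(\<Sum>r<N. a r * e r * \<phi> r + e r * z r) = 2 * (\<Sum>r<N. a r * (\<phi> r)\<^sup>2)"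
proof -
  have pe: "Mv N k e \<phi> r = e r" if "r < N" for r
    unfolding \<phi>_def by (rule Mv_solv[OF kpos that])
  have mz: "Mv N k e z r = 2 * a r * \<phi> r - Mv N k e (\<lambda>j. a j * \<phi> j) r" if "r < N" for r
    using zc[OF that] Mv_add[of N k e z "\<lambda>j. a j * \<phi> j" r] by simp
  have "(\<Sum>r<N. e r * z r) = (\<Sum>r<N. Mv N k e \<phi> r * z r)" by (simp add: pe)
  also have "\<dots> = (\<Sum>r<N. \<phi> r * Mv N k e z r)" by (rule Mv_sym[symmetric])
  also have "\<dots> = (\<Sum>r<N. \<phi> r * (2 * a r * \<phi> r - Mv N k e (\<lambda>j. a j * \<phi> j) r))" by (simp add: mz)
  also have "\<dots> = 2 * (\<Sum>r<N. a r * (\<phi> r)\<^sup>2) - (\<Sum>r<N. \<phi> r * Mv N k e (\<lambda>j. a j * \<phi> j) r)"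
    by (simp add: right_diff_distrib sum_subtractf sum_distrib_left power2_eq_square mult_ac)
  also have "(\<Sum>r<N. \<phi> r * Mv N k e (\<lambda>j. a j * \<phi> j) r) = (\<Sum>r<N. Mv N k e \<phi> r * (a r * \<phi> r))"
    by (rule Mv_sym)
  also have "\<dots> = (\<Sum>r<N. a r * e r * \<phi> r)" by (simp add: pe mult_ac)
  finally show ?thesis by (simp add: sum.distrib)
qed

lemma sym_two_dirs:
  fixes k e a b p q :: "nat \<Rightarrow> real"
  assumes kpos: "\<And>j. j < N \<Longrightarrow> k j > 0"
  assumes pc: "\<And>r. r < N \<Longrightarrow> Mv N k e (\<lambda>j. p j + a j * \<phi> j) r = 2 * a r * \<phi> r"
  assumes qc: "\<And>r. r < N \<Longrightarrow> Mv N k e (\<lambda>j. q j + b j * \<phi> j) r = 2 * b r * \<phi> r"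
  shows "(\<Sum>r<N. b r * \<phi> r * p r) = (\<Sum>r<N. a r * \<phi> r * q r)"
proof -
  let ?P = "\<lambda>j. p j + a j * \<phi> j" and ?Q = "\<lambda>j. q j + b j * \<phi> j"
  have "(\<Sum>r<N. b r * \<phi> r * ?P r) = (\<Sum>r<N. Mv N k e ?Q r * ?P r) / 2"
    unfolding sum_divide_distrib by (rule sum.cong) (auto simp: qc)
  also have "(\<Sum>r<N. Mv N k e ?Q r * ?P r) = (\<Sum>r<N. ?Q r * Mv N k e ?P r)" by (rule Mv_sym[symmetric])
  also have "(\<Sum>r<N. ?Q r * Mv N k e ?P r) / 2 = (\<Sum>r<N. a r * \<phi> r * ?Q r)"
    unfolding sum_divide_distrib by (rule sum.cong) (auto simp: pc)
  finally have "(\<Sum>r<N. b r * \<phi> r * ?P r) = (\<Sum>r<N. a r * \<phi> r * ?Q r)" .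
  then show ?thesis
    by (simp add: distrib_left sum.distrib mult_ac)
qed

lemma solv_cong: "(\<And>r. r < N \<Longrightarrow> y r = y' r) \<Longrightarrow> solv N k e y = solv N k e y'"
proof -
  assume "\<And>r. r < N \<Longrightarrow> y r = y' r"
  then have "vec N y = vec N y'" by (intro eq_vecI) auto
  then show ?thesis unfolding solv_def by simp
qed

lemma kk_sum:
  fixes k e w :: "nat \<Rightarrow> real"
  assumes kpos: "\<And>j. j < N \<Longrightarrow> k j > 0" and r: "r < N"
  shows "(\<Sum>j<N. (k r + k j) * (e r * e j / (k r + k j)) * w j) = e r * (\<Sum>j<N. e j * w j)"
proof -
  have "(k r + k j) * (e r * e j / (k r + k j)) * w j = e r * (e j * w j)" if "j < N" for j
  proof -
    have "k r + k j \<noteq> 0" using kpos[OF r] kpos[OF that] by simp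
    then show ?thesis by (simp add: field_simps)
  qed
  then show ?thesis unfolding sum_distrib_left by (intro sum.cong) auto
qed

lemma xx_alg:
  fixes k e :: "nat \<Rightarrow> real"
  assumes kpos: "\<And>j. j < N \<Longrightarrow> k j > 0" and r: "r < N"
  defines "\<phi> \<equiv> solv N k e e"
  shows "Mv N k e (\<lambda>j. (k j)\<^sup>2 * \<phi> j) r = (k r)\<^sup>2 * e r - k r * e r * (\<Sum>j<N. e j * \<phi> j) + e r * (\<Sum>j<N. k j * e j * \<phi> j)"
proof -
  define T where "T = (\<Sum>j<N. e r * e j / (k r + k j) * \<phi> j)"
  have p: "\<phi> r + T = e r"
    using Mv_solv[OF kpos r, where e=e and y=e] Mv_expand[OF r] unfolding \<phi>_def T_def by simp
  have t: "e r * e j / (k r + k j) * ((k j)\<^sup>2 * \<phi> j) = e r * (k j * e j * \<phi> j) - k r * e r * (e j * \<phi> j) + (k r)\<^sup>2 * (e r * e j / (k r + k j) * \<phi> j)"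
    if j: "j < N" for j
  proof -
    have ne: "k r + k j \<noteq> 0" using kpos[OF r] kpos[OF j] by simp
    have "(k j)\<^sup>2 = (k j - k r) * (k r + k j) + (k r)\<^sup>2" by (simp add: power2_eq_square algebra_simps)
    then have "e r * e j / (k r + k j) * ((k j)\<^sup>2 * \<phi> j) = e r * e j / (k r + k j) * (((k j - k r) * (k r + k j) + (k r)\<^sup>2) * \<phi> j)"
      by simp
    also have "\<dots> = e r * (k j * e j * \<phi> j) - k r * e r * (e j * \<phi> j) + (k r)\<^sup>2 * (e r * e j / (k r + k j) * \<phi> j)"
      using ne by (simp add: field_simps)
    finally show ?thesis .
  qed
  have "Mv N k e (\<lambda>j. (k j)\<^sup>2 * \<phi> j) r = (k r)\<^sup>2 * \<phi> r + (\<Sum>j<N. e r * e j / (k r + k j) * ((k j)\<^sup>2 * \<phi> j))"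
    by (rule Mv_expand[OF r])
  also have "(\<Sum>j<N. e r * e j / (k r + k j) * ((k j)\<^sup>2 * \<phi> j)) =
      e r * (\<Sum>j<N. k j * e j * \<phi> j) - k r * e r * (\<Sum>j<N. e j * \<phi> j) + (k r)\<^sup>2 * T"
    unfolding T_def sum_distrib_left sum_subtractf[symmetric] sum.distrib[symmetric]
    by (rule sum.cong) (use t in auto)
  moreover have "(k r)\<^sup>2 * T = (k r)\<^sup>2 * e r - (k r)\<^sup>2 * \<phi> r" using p[symmetric] by (simp add: algebra_simps)
  ultimately show ?thesis by linarith
qed

lemma rowrep_det:
  fixes k e :: "nat \<Rightarrow> real"
  assumes r: "r < N"
  shows "det (mat N N (\<lambda>(i,c). if i = r then e i * e c else Mf k e i c)) = e r * det (replace_col (MM N k e) (vec N e) r)"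
proof -
  define A0 where "A0 = mat N N (\<lambda>(i,c). if i = r then e c else Mf k e i c)"
  have A0c: "A0 \<in> carrier_mat N N" by (simp add: A0_def)
  have "mat N N (\<lambda>(i,c). if i = r then e i * e c else Mf k e i c) = multrow r (e r) A0"
    by (rule eq_matI) (auto simp: A0_def mat_multrow_def)
  then have "det (mat N N (\<lambda>(i,c). if i = r then e i * e c else Mf k e i c)) = e r * det A0"
    using det_multrow[OF r A0c] by simp
  also have "det A0 = det (transpose_mat A0)" by (rule det_transpose[OF A0c, symmetric])
  also have "transpose_mat A0 = replace_col (MM N k e) (vec N e) r"
    by (rule eq_matI) (auto simp: A0_def replace_col_def MM_def transpose_mat_def Mf_sym)
  finally show ?thesis .
qed

lemma det_replace_col_solv:
  fixes k e :: "nat \<Rightarrow> real"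
  assumes kpos: "\<And>j. j < N \<Longrightarrow> k j > 0"
  shows "det (replace_col (MM N k e) (vec N y) r) = tauv N k e * solv N k e y r"
  using tau_nonzero[OF kpos, where e=e] by (simp add: solv_def)

lemma tau_deriv:
  fixes k :: "nat \<Rightarrow> real" and e :: "real \<Rightarrow> nat \<Rightarrow> real"
  assumes kpos: "\<And>j. j < N \<Longrightarrow> k j > 0"
    and ed: "\<And>j. j < N \<Longrightarrow> ((\<lambda>s. e s j) has_real_derivative k j * e sx j) (at sx)"
  shows "((\<lambda>s. tauv N k (e s)) has_real_derivative
     tauv N k (e sx) * (\<Sum>r<N. e sx r * solv N k (e sx) (e sx) r)) (at sx)"
proof -
  have "((\<lambda>s. det (mat N N (\<lambda>(i,c). (\<lambda>i c s. Mf k (e s) i c) i c s))) has_real_derivative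
     (\<Sum>r<N. det (mat N N (\<lambda>(i,c). if i = r then e sx i * e sx c else Mf k (e sx) i c)))) (at sx)"
  proof (rule det_deriv)
    fix i c assume i: "i < N" and c: "c < N"
    have ne: "k i + k c \<noteq> 0" using kpos[OF i] kpos[OF c] by simp
    have eq: "(k i + k c) * (e sx i * e sx c) / (k i + k c) = e sx i * e sx c" using ne by simp
    show "((\<lambda>s. Mf k (e s) i c) has_real_derivative e sx i * e sx c) (at sx)"
      using Mf_deriv[OF ed[OF i] ed[OF c], of k] unfolding eq .
  qed
  also have "(\<Sum>r<N. det (mat N N (\<lambda>(i,c). if i = r then e sx i * e sx c else Mf k (e sx) i c)))
      = tauv N k (e sx) * (\<Sum>r<N. e sx r * solv N k (e sx) (e sx) r)"
    unfolding sum_distrib_left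
    by (rule sum.cong[OF refl]) (simp add: rowrep_det det_replace_col_solv[OF kpos] mult_ac)
  finally show ?thesis unfolding tauv_def MM_def by simp
qed

locale ksol =
  fixes N :: nat and k om x0 :: "nat \<Rightarrow> real"
  assumes kpos: "\<And>j. j < N \<Longrightarrow> k j > 0"
begin

definition ff where "ff j x t = exp (k j * x + om j * t + x0 j)"
definition ev where "ev x t = (\<lambda>j. ff j x t)"
definition ph where "ph i x t = solv N k (ev x t) (ev x t) i"
definition rx where "rx a x t = (\<lambda>r. a r * ev x t r - (\<Sum>j<N. (a r + a j) * (ev x t r * ev x t j / (k r + k j)) * ph j x t))"
definition phx where "phx i x t = solv N k (ev x t) (rx k x t) i"
definition pht where "pht i x t = solv N k (ev x t) (rx om x t) i"
definition SS where "SS x t = (\<Sum>j<N. ev x t j * ph j x t)"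
definition QQ where "QQ x t = (\<Sum>j<N. k j * (ph j x t)\<^sup>2)"
definition PP where "PP x t = (\<Sum>j<N. k j * ev x t j * ph j x t)"
definition uu where "uu x t = 4 * QQ x t"

lemma ff_dx: "((\<lambda>y. ev y t j) has_real_derivative k j * ev x t j) (at x)"
  unfolding ev_def ff_def by (auto intro!: derivative_eq_intros)

lemma ff_dt: "((\<lambda>s. ev x s j) has_real_derivative om j * ev x t j) (at t)"
  unfolding ev_def ff_def by (auto intro!: derivative_eq_intros)

lemma ph_dx: "i < N \<Longrightarrow> ((\<lambda>y. ph i y t) has_real_derivative phx i x t) (at x)"
  unfolding ph_def phx_def rx_def
  using solv_deriv[where N=N and k=k, OF kpos, where e = "\<lambda>y. ev y t" and y = "\<lambda>y. ev y t" and a = k and sx = x and y' = "\<lambda>j. k j * ev x t j"]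
  using ff_dx by blast

lemma ph_dt: "i < N \<Longrightarrow> ((\<lambda>s. ph i x s) has_real_derivative pht i x t) (at t)"
  unfolding ph_def pht_def rx_def
  using solv_deriv[where N=N and k=k, OF kpos, where e = "\<lambda>s. ev x s" and y = "\<lambda>s. ev x s" and a = om and sx = t and y' = "\<lambda>j. om j * ev x t j"]
  using ff_dt by blast

lemma char_x: "r < N \<Longrightarrow> Mv N k (ev x t) (\<lambda>j. phx j x t + k j * ph j x t) r = 2 * k r * ph r x t"
  unfolding phx_def ph_def rx_def by (rule dir_char[where N=N and k=k, OF kpos])

lemma char_t: "r < N \<Longrightarrow> Mv N k (ev x t) (\<lambda>j. pht j x t + om j * ph j x t) r = 2 * om r * ph r x t"
  unfolding pht_def ph_def rx_def by (rule dir_char[where N=N and k=k, OF kpos])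

lemma SS_dx: "((\<lambda>y. SS y t) has_real_derivative 2 * QQ x t) (at x)"
proof -
  have "((\<lambda>y. SS y t) has_real_derivative (\<Sum>r<N. k r * ev x t r * ph r x t + ev x t r * phx r x t)) (at x)"
    unfolding SS_def
    by (rule DERIV_sum) (auto intro!: derivative_eq_intros ff_dx ph_dx simp: algebra_simps)
  also have "(\<Sum>r<N. k r * ev x t r * ph r x t + ev x t r * phx r x t) = 2 * QQ x t"
    unfolding QQ_def using S_deriv_alg[where N=N and k=k, OF kpos, where e = "ev x t" and a = k and z = "\<lambda>j. phx j x t"]
    using char_x[of _ x t] unfolding ph_def by blast
  finally show ?thesis .
qed

lemma tau_dx: "((\<lambda>y. tauv N k (ev y t)) has_real_derivative tauv N k (ev x t) * SS x t) (at x)"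
  unfolding SS_def ph_def by (rule tau_deriv[where N=N and k=k, OF kpos ff_dx])

lemma lntau_dx: "((\<lambda>y. ln (tauv N k (ev y t))) has_real_derivative SS x t) (at x)"
proof -
  have "((\<lambda>y. ln (tauv N k (ev y t))) has_real_derivative (1 / tauv N k (ev x t)) * (tauv N k (ev x t) * SS x t)) (at x)"
    by (rule DERIV_chain2[OF DERIV_ln_divide tau_dx]) (rule tau_pos[where N=N and k=k, OF kpos])
  then show ?thesis using tau_pos[where N=N and k=k and e="ev x t", OF kpos] by simp
qed

lemma rxk: "r < N \<Longrightarrow> rx k y t r = k r * ev y t r - ev y t r * SS y t"
  unfolding rx_def SS_def using kk_sum[where N=N and k=k, OF kpos] by simp

lemma phx_alt: "phx i y t = solv N k (ev y t) (\<lambda>r. k r * ev y t r - ev y t r * SS y t) i"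
  unfolding phx_def by (rule arg_cong[where f="\<lambda>f. f i"], rule solv_cong) (simp add: rxk)

lemma sum_e_phx: "(\<Sum>j<N. ev x t j * phx j x t) = 2 * QQ x t - PP x t"
proof -
  have "(\<Sum>r<N. k r * ev x t r * ph r x t + ev x t r * phx r x t) = 2 * QQ x t"
    unfolding QQ_def using S_deriv_alg[where N=N and k=k, OF kpos, where e = "ev x t" and a = k and z = "\<lambda>j. phx j x t"]
    using char_x[of _ x t] unfolding ph_def by blast
  then show ?thesis unfolding PP_def sum.distrib by simp
qed

lemma phx_dx:
  assumes i: "i < N"
  shows "((\<lambda>y. phx i y t) has_real_derivative ((k i)\<^sup>2 - uu x t) * ph i x t) (at x)"
proof -
  define Y where "Y y = (\<lambda>r. k r * ev y t r - ev y t r * SS y t)" for y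
  define Y' where "Y' = (\<lambda>r. k r * (k r * ev x t r) - (k r * ev x t r * SS x t + ev x t r * (2 * QQ x t)))"
  have Yd: "((\<lambda>y. Y y r) has_real_derivative Y' r) (at x)" for r
    unfolding Y_def Y'_def by (auto intro!: derivative_eq_intros ff_dx SS_dx)
  have phxY: "phx j y t = solv N k (ev y t) (Y y) j" for j y
    unfolding Y_def by (rule phx_alt)
  have D: "((\<lambda>y. solv N k (ev y t) (Y y) i) has_real_derivative
     solv N k (ev x t) (\<lambda>r. Y' r - (\<Sum>j<N. (k r + k j) * (ev x t r * ev x t j / (k r + k j)) * solv N k (ev x t) (Y x) j)) i) (at x)"
    by (rule solv_deriv[where N=N and k=k, OF kpos ff_dx Yd i])
  have eq: "solv N k (ev x t) (\<lambda>r. Y' r - (\<Sum>j<N. (k r + k j) * (ev x t r * ev x t j / (k r + k j)) * solv N k (ev x t) (Y x) j)) i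
      = ((k i)\<^sup>2 - uu x t) * ph i x t"
  proof (rule Mv_unique[where N=N and k=k, OF kpos _ i, where e = "ev x t"])
    fix r assume r: "r < N"
    have "Mv N k (ev x t) (solv N k (ev x t) (\<lambda>r. Y' r - (\<Sum>j<N. (k r + k j) * (ev x t r * ev x t j / (k r + k j)) * solv N k (ev x t) (Y x) j))) r
        = Y' r - (\<Sum>j<N. (k r + k j) * (ev x t r * ev x t j / (k r + k j)) * phx j x t)"
      by (simp add: Mv_solv[where N=N and k=k, OF kpos r] phxY)
    also have "\<dots> = Y' r - ev x t r * (2 * QQ x t - PP x t)"
      using kk_sum[where N=N and k=k and e="ev x t" and w = "\<lambda>j. phx j x t", OF kpos r] sum_e_phx[of x t] by simp
    also have "\<dots> = Mv N k (ev x t) (\<lambda>j. (k j)\<^sup>2 * ph j x t) r - uu x t * ev x t r"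
      using xx_alg[where N=N and k=k, OF kpos r, of "ev x t"]
      unfolding Y'_def uu_def SS_def PP_def ph_def by (simp add: algebra_simps power2_eq_square)
    also have "\<dots> = Mv N k (ev x t) (\<lambda>j. ((k j)\<^sup>2 - uu x t) * ph j x t) r"
      using Mv_diff[of N k "ev x t" "\<lambda>j. (k j)\<^sup>2 * ph j x t" "\<lambda>j. uu x t * ph j x t" r]
      using Mv_cmult[of N k "ev x t" "uu x t" "\<lambda>j. ph j x t" r]
      using Mv_solv[where N=N and k=k, OF kpos r, of "ev x t" "ev x t"]
      unfolding ph_def by (simp add: left_diff_distrib)
    finally show "Mv N k (ev x t) (solv N k (ev x t) (\<lambda>r. Y' r - (\<Sum>j<N. (k r + k j) * (ev x t r * ev x t j / (k r + k j)) * solv N k (ev x t) (Y x) j))) r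
        = Mv N k (ev x t) (\<lambda>j. ((k j)\<^sup>2 - uu x t) * ph j x t) r" .
  qed
  note D' = D[unfolded eq]
  show ?thesis using D' unfolding phxY[symmetric] .
qed

lemma uu_dx: "((\<lambda>y. uu y t) has_real_derivative 8 * (\<Sum>j<N. k j * ph j x t * phx j x t)) (at x)"
proof -
  have "((\<lambda>y. uu y t) has_real_derivative 4 * (\<Sum>j<N. k j * (2 * ph j x t * phx j x t))) (at x)"
    unfolding uu_def QQ_def
    by (intro DERIV_cmult DERIV_sum) (auto intro!: derivative_eq_intros ph_dx)
  then show ?thesis by (simp add: sum_distrib_left mult_ac)
qed

lemma uu_dt: "((\<lambda>s. uu x s) has_real_derivative 8 * (\<Sum>j<N. k j * ph j x t * pht j x t)) (at t)"
proof -
  have "((\<lambda>s. uu x s) has_real_derivative 4 * (\<Sum>j<N. k j * (2 * ph j x t * pht j x t))) (at t)"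
    unfolding uu_def QQ_def
    by (intro DERIV_cmult DERIV_sum) (auto intro!: derivative_eq_intros ph_dt)
  then show ?thesis by (simp add: sum_distrib_left mult_ac)
qed

lemma dt_sym: "(\<Sum>j<N. k j * ph j x t * pht j x t) = (\<Sum>j<N. om j * ph j x t * phx j x t)"
  by (rule sym_two_dirs[where N=N and k=k, OF kpos char_t char_x])

end

lemma sq_diff_le: "((a::real) - b)\<^sup>2 \<le> 2 * a\<^sup>2 + 2 * b\<^sup>2"
proof -
  have "(a - b)\<^sup>2 = 2 * a\<^sup>2 + 2 * b\<^sup>2 - (a + b)\<^sup>2" by (simp add: power2_eq_square algebra_simps)
  moreover have "0 \<le> (a + b)\<^sup>2" by simp
  ultimately show ?thesis by linarith
qed

lemma abs_prod_le: "\<bar>(a::real) * b\<bar> \<le> (a\<^sup>2 + b\<^sup>2) / 2"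
proof -
  have "2 * a * b \<le> a\<^sup>2 + b\<^sup>2" by (rule sum_squares_bound)
  moreover have "2 * a * (- b) \<le> a\<^sup>2 + (- b)\<^sup>2" by (rule sum_squares_bound)
  ultimately show ?thesis unfolding abs_le_iff by simp
qed

context ksol begin

definition EE where "EE y t = (\<Sum>j<N. (ev y t j)\<^sup>2)"
definition KK where "KK = (\<Sum>j<N. k j)"

lemma k_le_KK: "i < N \<Longrightarrow> k i \<le> KK"
  unfolding KK_def by (rule member_le_sum) (auto intro: less_imp_le kpos)

lemma KK_nonneg: "KK \<ge> 0"
  unfolding KK_def by (rule sum_nonneg) (auto intro: less_imp_le kpos)

lemma EE_nonneg: "EE y t \<ge> 0" unfolding EE_def by (simp add: sum_nonneg)

lemma sumsq_ph: "(\<Sum>j<N. (ph j y t)\<^sup>2) \<le> EE y t"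
  unfolding EE_def ph_def
  by (rule sol_bound[where N=N and k=k and e="ev y t"]) (auto intro: kpos solv_eq[where N=N and k=k])

lemma ph_sq: "i < N \<Longrightarrow> (ph i y t)\<^sup>2 \<le> EE y t"
  using sumsq_ph[of y t] member_le_sum[of i "{..<N}" "\<lambda>j. (ph j y t)\<^sup>2"] by auto

lemma kph_sq: "(\<Sum>j<N. (2 * k j * ph j y t)\<^sup>2) \<le> 4 * KK\<^sup>2 * EE y t"
proof -
  have "(\<Sum>j<N. (2 * k j * ph j y t)\<^sup>2) \<le> (\<Sum>j<N. 4 * KK\<^sup>2 * (ph j y t)\<^sup>2)"
  proof (rule sum_mono)
    fix j assume j: "j \<in> {..<N}"
    have "(k j)\<^sup>2 \<le> KK\<^sup>2" using k_le_KK[of j] kpos[of j] j by (intro power_mono) auto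
    then show "(2 * k j * ph j y t)\<^sup>2 \<le> 4 * KK\<^sup>2 * (ph j y t)\<^sup>2"
      by (simp add: power_mult_distrib mult_right_mono)
  qed
  also have "\<dots> = 4 * KK\<^sup>2 * (\<Sum>j<N. (ph j y t)\<^sup>2)" by (simp add: sum_distrib_left)
  also have "\<dots> \<le> 4 * KK\<^sup>2 * EE y t" by (rule mult_left_mono[OF sumsq_ph]) simp
  finally show ?thesis .
qed

lemma phx_sq: assumes i: "i < N" shows "(phx i y t)\<^sup>2 \<le> 10 * KK\<^sup>2 * EE y t"
proof -
  define w where "w = (\<lambda>j. phx j y t + k j * ph j y t)"
  have mw: "(\<Sum>ja<N. Mf k (ev y t) j ja * w ja) = 2 * k j * ph j y t" if "j < N" for j
    using char_x[OF that, of y t] unfolding w_def Mv_def .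
  have "(\<Sum>j<N. (w j)\<^sup>2) \<le> (\<Sum>j<N. (2 * k j * ph j y t)\<^sup>2)"
    by (rule sol_bound[where N=N and k=k and e="ev y t"]) (auto intro: kpos mw)
  also have "\<dots> \<le> 4 * KK\<^sup>2 * EE y t" by (rule kph_sq)
  finally have "(w i)\<^sup>2 \<le> 4 * KK\<^sup>2 * EE y t"
    using member_le_sum[of i "{..<N}" "\<lambda>j. (w j)\<^sup>2"] i by auto
  moreover have "(k i * ph i y t)\<^sup>2 \<le> KK\<^sup>2 * EE y t"
  proof -
    have "(k i)\<^sup>2 \<le> KK\<^sup>2" using k_le_KK[OF i] kpos[OF i] by (intro power_mono) auto
    then show ?thesis using ph_sq[OF i, of y t]
      by (simp add: power_mult_distrib) (rule mult_mono, auto)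
  qed
  moreover have "(phx i y t)\<^sup>2 \<le> 2 * (w i)\<^sup>2 + 2 * (k i * ph i y t)\<^sup>2"
  proof -
    have "phx i y t = w i - k i * ph i y t" by (simp add: w_def)
    then show ?thesis using sq_diff_le[of "w i" "k i * ph i y t"] by simp
  qed
  ultimately show ?thesis by linarith
qed

definition ux where "ux y t = 8 * (\<Sum>j<N. k j * ph j y t * phx j y t)"
definition HH where "HH i y t = (phx i y t)\<^sup>2 + uu y t * (ph i y t)\<^sup>2 - (k i)\<^sup>2 * (ph i y t)\<^sup>2"
definition C1 where "C1 = 4 * real N * KK * (1 + 10 * KK\<^sup>2)"

lemma dx_uu: "dx uu y t = ux y t"
  unfolding dx_def ux_def by (rule DERIV_imp_deriv[OF uu_dx])

lemma uu_bound: "\<bar>uu y t\<bar> \<le> 4 * KK * EE y t"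
proof -
  have nn: "uu y t \<ge> 0" unfolding uu_def QQ_def
    by (intro mult_nonneg_nonneg sum_nonneg) (auto intro: less_imp_le kpos)
  have "QQ y t \<le> (\<Sum>j<N. KK * (ph j y t)\<^sup>2)"
    unfolding QQ_def by (rule sum_mono) (auto intro!: mult_right_mono k_le_KK)
  also have "\<dots> \<le> KK * EE y t" unfolding sum_distrib_left[symmetric]
    by (rule mult_left_mono[OF sumsq_ph KK_nonneg])
  finally have "QQ y t \<le> KK * EE y t" .
  moreover have "\<bar>uu y t\<bar> = uu y t" using nn by simp
  ultimately show ?thesis unfolding uu_def by simp
qed

lemma C1_nonneg: "C1 \<ge> 0" unfolding C1_def using KK_nonneg by simp

lemma ux_bound: "\<bar>ux y t\<bar> \<le> C1 * EE y t"
proof -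
  have "\<bar>ux y t\<bar> \<le> 8 * (\<Sum>j<N. \<bar>k j * ph j y t * phx j y t\<bar>)"
    unfolding ux_def abs_mult by (simp add: order_trans[OF sum_abs] abs_mult)
  also have "\<dots> \<le> 8 * (\<Sum>j<N. KK * ((1 + 10 * KK\<^sup>2) * EE y t) / 2)"
  proof (intro mult_left_mono sum_mono)
    fix j assume j: "j \<in> {..<N}"
    have a: "\<bar>ph j y t * phx j y t\<bar> \<le> ((ph j y t)\<^sup>2 + (phx j y t)\<^sup>2) / 2"
      by (rule abs_prod_le)
    have b: "((ph j y t)\<^sup>2 + (phx j y t)\<^sup>2) / 2 \<le> ((1 + 10 * KK\<^sup>2) * EE y t) / 2"
      using ph_sq[of j y t] phx_sq[of j y t] j by (simp add: algebra_simps)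
    have "\<bar>k j * ph j y t * phx j y t\<bar> = k j * \<bar>ph j y t * phx j y t\<bar>"
      using kpos[of j] j by (simp add: abs_mult)
    also have "\<dots> \<le> KK * (((1 + 10 * KK\<^sup>2) * EE y t) / 2)"
      by (rule mult_mono) (use a b k_le_KK[of j] j KK_nonneg in auto)
    finally show "\<bar>k j * ph j y t * phx j y t\<bar> \<le> KK * ((1 + 10 * KK\<^sup>2) * EE y t) / 2" by simp
  qed simp
  also have "\<dots> = C1 * EE y t" unfolding C1_def by simp
  finally show ?thesis .
qed

lemma ev_mono: assumes "y \<le> x" "j < N" shows "ev y t j \<le> ev x t j"
proof -
  have "k j * y \<le> k j * x" by (rule mult_left_mono) (use assms kpos[of j] in auto)
  then show ?thesis unfolding ev_def ff_def by simp
qed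

lemma EE_mono: "y \<le> x \<Longrightarrow> EE y t \<le> EE x t"
  unfolding EE_def
proof (rule sum_mono)
  fix j assume "y \<le> x" "j \<in> {..<N}"
  then have "ev y t j \<le> ev x t j" by (intro ev_mono) auto
  moreover have "0 \<le> ev y t j" by (simp add: ev_def ff_def)
  ultimately show "(ev y t j)\<^sup>2 \<le> (ev x t j)\<^sup>2" by (rule power_mono)
qed

lemma ev_sq: "(ev y t j)\<^sup>2 = exp ((2 * k j) * y + 2 * (om j * t + x0 j))"
  unfolding ev_def ff_def by (simp add: power2_eq_square exp_add[symmetric] algebra_simps)

lemma EE_int: "((\<lambda>y. EE y t) has_integral (\<Sum>j<N. exp ((2 * k j) * x + 2 * (om j * t + x0 j)) / (2 * k j))) {..x}"
  unfolding EE_def ev_sq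
  by (rule has_integral_sum) (auto intro!: exp_int_minf kpos)

lemma EE_integrable: "(\<lambda>y. c * EE y t) integrable_on {..x}"
  using has_integral_mult_right[OF EE_int] by blast

lemma EE_lim: "((\<lambda>y. EE y t) \<longlongrightarrow> 0) at_bot"
proof -
  have "((\<lambda>y. exp ((2 * k j) * y + 2 * (om j * t + x0 j))) \<longlongrightarrow> 0) at_bot" if "j < N" for j
  proof -
    have "2 * k j > 0" using kpos[OF that] by simp
    then show ?thesis by real_asymp
  qed
  then have "((\<lambda>y. \<Sum>j<N. exp ((2 * k j) * y + 2 * (om j * t + x0 j))) \<longlongrightarrow> (\<Sum>j<N. 0)) at_bot"
    by (intro tendsto_sum) auto
  then show ?thesis unfolding EE_def ev_sq by simp
qed

lemma int_ux: "((\<lambda>y. dx uu y t) has_integral uu x t) {..x}"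
proof (rule ftc_minf[where h = "\<lambda>y. C1 * EE y t"])
  show "((\<lambda>y. uu y t) has_real_derivative dx uu y t) (at y)" for y
    unfolding dx_uu ux_def by (rule uu_dx)
  show "\<bar>dx uu y t\<bar> \<le> C1 * EE y t" for y unfolding dx_uu by (rule ux_bound)
  show "(\<lambda>y. C1 * EE y t) integrable_on {..x}" by (rule EE_integrable)
  show "((\<lambda>y. uu y t) \<longlongrightarrow> 0) at_bot"
  proof (rule Lim_null_comparison)
    show "\<forall>\<^sub>F y in at_bot. norm (uu y t) \<le> 4 * KK * EE y t" using uu_bound by simp
    show "((\<lambda>y. 4 * KK * EE y t) \<longlongrightarrow> 0) at_bot" using tendsto_mult_right_zero[OF EE_lim] by simp
  qed
qed

lemma HH_dx: "i < N \<Longrightarrow> ((\<lambda>y. HH i y t) has_real_derivative ux x t * (ph i x t)\<^sup>2) (at x)"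
  unfolding HH_def
  apply (rule derivative_eq_intros phx_dx uu_dx[unfolded ux_def[symmetric]] ph_dx refl | assumption)+
  by (simp add: power2_eq_square algebra_simps)

lemma int_H: assumes i: "i < N"
  shows "((\<lambda>y. dx uu y t * (ph i y t)\<^sup>2) has_integral HH i x t) {..x}"
proof (rule ftc_minf[where h = "\<lambda>y. (C1 * EE x t) * EE y t"])
  show "((\<lambda>y. HH i y t) has_real_derivative dx uu y t * (ph i y t)\<^sup>2) (at y)" for y
    unfolding dx_uu by (rule HH_dx[OF i])
  show "\<bar>dx uu y t * (ph i y t)\<^sup>2\<bar> \<le> C1 * EE x t * EE y t" if "y \<le> x" for y
  proof -
    have "\<bar>dx uu y t * (ph i y t)\<^sup>2\<bar> = \<bar>ux y t\<bar> * (ph i y t)\<^sup>2" by (simp add: dx_uu abs_mult)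
    also have "\<dots> \<le> (C1 * EE y t) * EE y t"
      by (rule mult_mono) (use ux_bound ph_sq[OF i] EE_nonneg C1_nonneg in auto)
    also have "\<dots> \<le> (C1 * EE x t) * EE y t"
    proof (rule mult_right_mono[OF mult_left_mono[OF EE_mono[OF that]]])
      show "0 \<le> C1" unfolding C1_def using KK_nonneg by simp
    qed (rule EE_nonneg)
    finally show ?thesis .
  qed
  show "(\<lambda>y. C1 * EE x t * EE y t) integrable_on {..x}" by (rule EE_integrable)
  show "((\<lambda>y. HH i y t) \<longlongrightarrow> 0) at_bot"
  proof (rule Lim_null_comparison)
    show "\<forall>\<^sub>F y in at_bot. norm (HH i y t) \<le> (11 * KK\<^sup>2 + 4 * KK * EE x t) * EE y t"
      unfolding eventually_at_bot_linorder
    proof (intro exI allI impI)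
      fix y assume y: "y \<le> x"
      have p: "(ph i y t)\<^sup>2 \<le> EE y t" by (rule ph_sq[OF i])
      have q: "(phx i y t)\<^sup>2 \<le> 10 * KK\<^sup>2 * EE y t" by (rule phx_sq[OF i])
      have r: "\<bar>uu y t * (ph i y t)\<^sup>2\<bar> \<le> (4 * KK * EE x t) * EE y t"
      proof -
        have "\<bar>uu y t * (ph i y t)\<^sup>2\<bar> = \<bar>uu y t\<bar> * (ph i y t)\<^sup>2" by (simp add: abs_mult)
        also have "\<dots> \<le> (4 * KK * EE y t) * EE y t"
          by (rule mult_mono) (use uu_bound p KK_nonneg EE_nonneg in auto)
        also have "\<dots> \<le> (4 * KK * EE x t) * EE y t"
          by (intro mult_right_mono mult_left_mono EE_mono y) (use KK_nonneg EE_nonneg in auto)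
        finally show ?thesis .
      qed
      have s: "(k i)\<^sup>2 * (ph i y t)\<^sup>2 \<le> KK\<^sup>2 * EE y t"
        by (rule mult_mono) (use p k_le_KK[OF i] kpos[OF i] in \<open>auto intro: power_mono\<close>)
      have s0: "0 \<le> (k i)\<^sup>2 * (ph i y t)\<^sup>2" by simp
      have t1: "0 \<le> (phx i y t)\<^sup>2" by simp
      have t2: "0 \<le> KK\<^sup>2 * EE y t" using EE_nonneg by simp
      show "norm (HH i y t) \<le> (11 * KK\<^sup>2 + 4 * KK * EE x t) * EE y t"
        unfolding HH_def real_norm_def abs_le_iff using q r[unfolded abs_le_iff] s s0 t1 t2
        by (simp only: distrib_right) (intro conjI; linarith)
    qed
    show "((\<lambda>y. (11 * KK\<^sup>2 + 4 * KK * EE x t) * EE y t) \<longlongrightarrow> 0) at_bot"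
      using tendsto_mult_right_zero[OF EE_lim] by simp
  qed
qed

end

context ksol begin

definition BB where "BB m = (\<lambda>x t. \<Sum>i<N. (-2 * k i * (- (k i)\<^sup>2) ^ m) * (ph i x t)\<^sup>2)"

lemma dx_sumsq: "dx (\<lambda>x t. \<Sum>i<N. c i * (ph i x t)\<^sup>2) = (\<lambda>x t. \<Sum>i<N. c i * (2 * ph i x t * phx i x t))"
proof (intro ext)
  fix x t
  have "((\<lambda>y. \<Sum>i<N. c i * (ph i y t)\<^sup>2) has_real_derivative (\<Sum>i<N. c i * (2 * ph i x t * phx i x t))) (at x)"
    by (rule DERIV_sum) (auto intro!: derivative_eq_intros ph_dx)
  then show "dx (\<lambda>x t. \<Sum>i<N. c i * (ph i x t)\<^sup>2) x t = (\<Sum>i<N. c i * (2 * ph i x t * phx i x t))"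
    unfolding dx_def by (rule DERIV_imp_deriv)
qed

lemma dx_dx_sumsq: "dx (dx (\<lambda>x t. \<Sum>i<N. c i * (ph i x t)\<^sup>2)) x t =
   (\<Sum>i<N. c i * (2 * (phx i x t)\<^sup>2 + 2 * ((k i)\<^sup>2 - uu x t) * (ph i x t)\<^sup>2))"
proof -
  have "((\<lambda>y. \<Sum>i<N. c i * (2 * ph i y t * phx i y t)) has_real_derivative
     (\<Sum>i<N. c i * (2 * (phx i x t)\<^sup>2 + 2 * ((k i)\<^sup>2 - uu x t) * (ph i x t)\<^sup>2))) (at x)"
  proof (rule DERIV_sum)
    fix i assume i: "i \<in> {..<N}"
    show "((\<lambda>y. c i * (2 * ph i y t * phx i y t)) has_real_derivative
       c i * (2 * (phx i x t)\<^sup>2 + 2 * ((k i)\<^sup>2 - uu x t) * (ph i x t)\<^sup>2)) (at x)"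
    proof -
      have a: "((\<lambda>y. ph i y t) has_real_derivative phx i x t) (at x)" using i by (simp add: ph_dx)
      have b: "((\<lambda>y. phx i y t) has_real_derivative ((k i)\<^sup>2 - uu x t) * ph i x t) (at x)" using i by (simp add: phx_dx)
      show ?thesis using a b by (auto intro!: derivative_eq_intros simp: power2_eq_square algebra_simps)
    qed
  qed
  then show ?thesis unfolding dx_sumsq dx_def by (rule DERIV_imp_deriv)
qed

lemma dinv_sumsq: "dinv (\<lambda>y s. dx uu y s * (\<Sum>i<N. c i * (ph i y s)\<^sup>2)) x t = (\<Sum>i<N. c i * HH i x t)"
proof -
  have "((\<lambda>y. \<Sum>i<N. c i * (dx uu y t * (ph i y t)\<^sup>2)) has_integral (\<Sum>i<N. c i * HH i x t)) {..x}"
    by (intro has_integral_sum has_integral_mult_right int_H) auto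
  moreover have "(\<lambda>y. \<Sum>i<N. c i * (dx uu y t * (ph i y t)\<^sup>2)) = (\<lambda>y. dx uu y t * (\<Sum>i<N. c i * (ph i y t)\<^sup>2))"
    by (simp add: sum_distrib_left mult_ac)
  ultimately show ?thesis unfolding dinv_def by (simp add: integral_unique)
qed

lemma Lop_sumsq: "Lop uu (\<lambda>x t. \<Sum>i<N. c i * (ph i x t)\<^sup>2) = (\<lambda>x t. \<Sum>i<N. (c i * (- (k i)\<^sup>2)) * (ph i x t)\<^sup>2)"
proof (intro ext)
  fix x t
  have "Lop uu (\<lambda>x t. \<Sum>i<N. c i * (ph i x t)\<^sup>2) x t =
     - (1/4) * (\<Sum>i<N. c i * (2 * (phx i x t)\<^sup>2 + 2 * ((k i)\<^sup>2 - uu x t) * (ph i x t)\<^sup>2))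
     - uu x t * (\<Sum>i<N. c i * (ph i x t)\<^sup>2) + (1/2) * (\<Sum>i<N. c i * HH i x t)"
    unfolding Lop_def dx_dx_sumsq dinv_sumsq ..
  also have "\<dots> = (\<Sum>i<N. - (1/4) * (c i * (2 * (phx i x t)\<^sup>2 + 2 * ((k i)\<^sup>2 - uu x t) * (ph i x t)\<^sup>2))
     - uu x t * (c i * (ph i x t)\<^sup>2) + (1/2) * (c i * HH i x t))"
    by (simp add: sum_distrib_left sum.distrib sum_subtractf)
  also have "\<dots> = (\<Sum>i<N. (c i * (- (k i)\<^sup>2)) * (ph i x t)\<^sup>2)"
    by (rule sum.cong) (simp_all add: HH_def algebra_simps)
  finally show "Lop uu (\<lambda>x t. \<Sum>i<N. c i * (ph i x t)\<^sup>2) x t = (\<Sum>i<N. (c i * (- (k i)\<^sup>2)) * (ph i x t)\<^sup>2)" .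
qed

lemma Lop_one: "Lop uu (\<lambda>x t. 1) = (\<lambda>x t. - uu x t / 2)"
proof (intro ext)
  fix x t
  have d1: "dx (\<lambda>x t. 1) = (\<lambda>x t. 0)" unfolding dx_def by (intro ext) simp
  have d2: "dx (\<lambda>x t. 0) = (\<lambda>x t. 0)" unfolding dx_def by (intro ext) simp
  have i: "dinv (\<lambda>y s. dx uu y s * 1) x t = uu x t"
    unfolding dinv_def using int_ux[of t x] by (simp add: integral_unique)
  show "Lop uu (\<lambda>x t. 1) x t = - uu x t / 2"
    unfolding Lop_def d1 d2 i by simp
qed

lemma bseq_BB: "bseq uu (Suc (Suc m)) = BB m"
proof (induction m)
  case 0
  have "bseq uu (Suc (Suc 0)) = (\<lambda>x t. - uu x t / 2)" by (simp add: Lop_one)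
  also have "\<dots> = BB 0"
  proof (intro ext)
    fix x t
    have "- uu x t / 2 = -2 * QQ x t" unfolding uu_def by simp
    also have "\<dots> = BB 0 x t" unfolding QQ_def BB_def by (simp add: sum_distrib_left mult_ac)
    finally show "- uu x t / 2 = BB 0 x t" .
  qed
  finally show ?case .
next
  case (Suc m)
  have "bseq uu (Suc (Suc (Suc m))) = Lop uu (bseq uu (Suc (Suc m)))" by simp
  also have "\<dots> = Lop uu (BB m)" by (simp only: Suc)
  also have "\<dots> = BB (Suc m)" unfolding BB_def Lop_sumsq by (simp add: mult_ac)
  finally show ?case .
qed

lemma dt_uu: "dt uu x t = 8 * (\<Sum>j<N. om j * ph j x t * phx j x t)"
  unfolding dt_def using DERIV_imp_deriv[OF uu_dt] dt_sym by simp

lemma dx_om: "dx (\<lambda>x t. \<Sum>i<N. (4 * om i) * (ph i x t)\<^sup>2) x t = 8 * (\<Sum>j<N. om j * ph j x t * phx j x t)"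
  unfolding dx_sumsq by (simp add: sum_distrib_left mult_ac)

end

lemma signof_sq: "signof p * signof p = (1::real)"
  by (simp add: sign_def)

lemma det_perm_both:
  fixes A :: "nat \<Rightarrow> nat \<Rightarrow> real"
  assumes p: "p permutes {0..<n}"
  shows "det (mat n n (\<lambda>(a,b). A (p a) (p b))) = det (mat n n (\<lambda>(a,b). A a b))"
proof -
  have pin: "p i < n" if "i < n" for i using permutes_in_image[OF p] that by auto
  define B where "B = mat n n (\<lambda>(a,b). A a (p b))"
  define C where "C = mat n n (\<lambda>(a,b). A b a)"
  have Bc: "B \<in> carrier_mat n n" and Cc: "C \<in> carrier_mat n n" by (auto simp: B_def C_def)
  have "mat n n (\<lambda>(a,b). A (p a) (p b)) = mat n n (\<lambda>(i,j). B $$ (p i, j))"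
    by (rule eq_matI) (auto simp: B_def pin)
  then have "det (mat n n (\<lambda>(a,b). A (p a) (p b))) = signof p * det B"
    using det_permute_rows[OF Bc p] by simp
  also have "det B = det (transpose_mat B)" using det_transpose[OF Bc] by simp
  also have "transpose_mat B = mat n n (\<lambda>(i,j). C $$ (p i, j))"
    by (rule eq_matI) (auto simp: B_def C_def pin)
  also have "det \<dots> = signof p * det C" by (rule det_permute_rows[OF Cc p])
  also have "det C = det (transpose_mat C)" using det_transpose[OF Cc] by simp
  also have "transpose_mat C = mat n n (\<lambda>(a,b). A a b)" by (rule eq_matI) (auto simp: C_def)
  finally show ?thesis by (simp add: mult.assoc[symmetric] signof_sq)
qed

definition sig :: "nat \<Rightarrow> nat \<Rightarrow> nat \<Rightarrow> nat" where
  "sig N j c = (if c < j then c else if c < N - 1 then Suc c else if c = N - 1 then j else c)"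

lemma sig_permutes: assumes j: "j < N" shows "sig N j permutes {0..<N}"
proof (rule bij_imp_permutes)
  have inj: "inj_on (sig N j) {0..<N}"
    unfolding inj_on_def sig_def using j by auto
  have sub: "sig N j ` {0..<N} \<subseteq> {0..<N}" unfolding sig_def using j by auto
  have "sig N j ` {0..<N} = {0..<N}" by (rule endo_inj_surj[OF _ sub inj]) simp
  with inj show "bij_betw (sig N j) {0..<N} {0..<N}" unfolding bij_betw_def by simp
  show "x \<notin> {0..<N} \<Longrightarrow> sig N j x = x" for x unfolding sig_def using j by auto
qed

context ksol begin

lemma dinv_ff: assumes a: "a < N" and b: "b < N"
  shows "dinv (\<lambda>y s. ff a y s * ff b y s) x t = ff a x t * ff b x t / (k a + k b)"
proof -
  have eq: "ff a y t * ff b y t = exp ((k a + k b) * y + ((om a + om b) * t + x0 a + x0 b))" for y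
    unfolding ff_def by (simp add: exp_add[symmetric] algebra_simps)
  have "((\<lambda>y. ff a y t * ff b y t) has_integral exp ((k a + k b) * x + ((om a + om b) * t + x0 a + x0 b)) / (k a + k b)) {..x}"
    unfolding eq by (rule exp_int_minf) (use kpos[OF a] kpos[OF b] in simp)
  then show ?thesis unfolding dinv_def eq[symmetric] by (simp add: integral_unique)
qed

definition fsl where "fsl = map ff [0..<N]"

lemma fsl_nth: "i < N \<Longrightarrow> fsl ! i = ff i" unfolding fsl_def by simp
lemma fsl_len: "length fsl = N" unfolding fsl_def by simp

lemma W1_tau: "W1 fsl x t = tauv N k (ev x t)"
  unfolding W1_def tauv_def MM_def fsl_len
  by (intro arg_cong[where f = det] eq_matI) (auto simp: fsl_nth dinv_ff Mf_def ev_def)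

lemma W1_pos: "W1 fsl x t > 0"
  unfolding W1_tau by (rule tau_pos[where N=N and k=k]) (rule kpos)

lemma dx_lnW1: "dx (\<lambda>y s. ln (W1 fsl y s)) = SS"
  unfolding W1_tau dx_def by (intro ext DERIV_imp_deriv lntau_dx)

lemma u_eq: "(\<lambda>x t. 2 * dx (dx (\<lambda>y s. ln (W1 fsl y s))) x t) = uu"
proof (intro ext)
  fix x t
  show "2 * dx (dx (\<lambda>y s. ln (W1 fsl y s))) x t = uu x t"
    unfolding dx_lnW1 uu_def using DERIV_imp_deriv[OF SS_dx, of t x] unfolding dx_def by simp
qed

lemma rowj_det: assumes j: "j < N"
  shows "det (mat N N (\<lambda>(r,c). if r = j then ev x t c else Mf k (ev x t) r c)) = tauv N k (ev x t) * ph j x t"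
proof -
  define A0 where "A0 = mat N N (\<lambda>(r,c). if r = j then ev x t c else Mf k (ev x t) r c)"
  have A0c: "A0 \<in> carrier_mat N N" by (simp add: A0_def)
  have "det A0 = det (transpose_mat A0)" by (rule det_transpose[OF A0c, symmetric])
  also have "transpose_mat A0 = replace_col (MM N k (ev x t)) (vec N (ev x t)) j"
    by (rule eq_matI) (auto simp: A0_def replace_col_def MM_def transpose_mat_def Mf_sym)
  also have "det \<dots> = tauv N k (ev x t) * ph j x t"
    unfolding ph_def by (rule det_replace_col_solv[where N=N and k=k]) (rule kpos)
  finally show ?thesis unfolding A0_def .
qed

lemma nth_perm_list:
  assumes j: "j < N" and c: "c < N"
  shows "(take j fsl @ drop (Suc j) fsl @ [ff j]) ! c = ff (sig N j c)"
proof -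
  have lt: "length (take j fsl) = j" using j by (simp add: fsl_len)
  have ld: "length (drop (Suc j) fsl) = N - Suc j" by (simp add: fsl_len)
  show ?thesis
  proof (cases "c < j")
    case True then show ?thesis using j by (simp add: nth_append lt sig_def fsl_nth fsl_len)
  next
    case False
    then have cj: "j \<le> c" by simp
    show ?thesis
    proof (cases "c < N - 1")
      case True
      then have "(take j fsl @ drop (Suc j) fsl @ [ff j]) ! c = drop (Suc j) fsl ! (c - j)"
      proof -
        have "c - j < N - Suc j" using True cj by arith
        then show ?thesis using cj j by (simp add: nth_append lt ld fsl_len)
      qed
      also have "\<dots> = fsl ! (Suc c)" using True cj j by (simp add: fsl_len)
      finally show ?thesis using True cj j by (simp add: sig_def fsl_nth)
    next
      case False
      then have "c = N - 1" using c by simp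
      have L: "length (take j fsl @ drop (Suc j) fsl) = N - 1" using j by (simp add: fsl_len)
      have "(take j fsl @ drop (Suc j) fsl @ [ff j]) ! (N - 1) = ff j"
        using nth_append_length[of "take j fsl @ drop (Suc j) fsl" "ff j"] L by simp
      moreover have "\<not> (N - Suc 0 < j)" using j by arith
      ultimately show ?thesis using \<open>c = N - 1\<close> j by (simp add: sig_def)
    qed
  qed
qed

lemma sig_lt: "j < N \<Longrightarrow> c < N \<Longrightarrow> sig N j c < N" unfolding sig_def by auto
lemma sig_ne_j: "j < N \<Longrightarrow> c < N - 1 \<Longrightarrow> sig N j c \<noteq> j" unfolding sig_def by auto
lemma sig_last: "j < N \<Longrightarrow> sig N j (N - Suc 0) = j" unfolding sig_def by auto
lemma sig_inj: "j < N \<Longrightarrow> a < N \<Longrightarrow> b < N \<Longrightarrow> (sig N j a = sig N j b) = (a = b)"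
  using sig_permutes[of j N] permutes_inj[of "sig N j" "{0..<N}"] by (auto simp: inj_def)

lemma W2_perm: assumes j: "j < N"
  shows "W2 (take j fsl @ drop (Suc j) fsl @ [ff j]) x t = tauv N k (ev x t) * ph j x t"
proof -
  let ?g = "take j fsl @ drop (Suc j) fsl @ [ff j]"
  define A where "A r c = (if r = j then ev x t c else Mf k (ev x t) r c)" for r c
  have len: "length ?g = N" using j by (simp add: fsl_len)
  have "W2 ?g x t = det (mat N N (\<lambda>(a,b). A (sig N j a) (sig N j b)))"
    unfolding W2_def len
  proof (intro arg_cong[where f = det] eq_matI)
    fix a b assume a: "a < dim_row (mat N N (\<lambda>(a,b). A (sig N j a) (sig N j b)))"
      and b: "b < dim_col (mat N N (\<lambda>(a,b). A (sig N j a) (sig N j b)))"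
    then have a: "a < N" and b: "b < N" by auto
    show "mat N N (\<lambda>(i,ja). if i < N - 1 then (if i = ja then 1 else 0) + dinv (\<lambda>y s. (?g ! i) y s * (?g ! ja) y s) x t
             else (?g ! ja) x t) $$ (a, b) = mat N N (\<lambda>(a,b). A (sig N j a) (sig N j b)) $$ (a, b)"
    proof (cases "a < N - 1")
      case True
      then show ?thesis using a b j
        by (simp add: nth_perm_list A_def sig_ne_j dinv_ff sig_lt Mf_def ev_def sig_inj)
    next
      case False
      then have "a = N - 1" using a by simp
      then show ?thesis using a b j False by (simp add: nth_perm_list A_def sig_last ev_def)
    qed
  qed auto
  also have "\<dots> = det (mat N N (\<lambda>(a,b). A a b))" by (rule det_perm_both[OF sig_permutes[OF j]])
  also have "\<dots> = tauv N k (ev x t) * ph j x t" unfolding A_def by (rule rowj_det[OF j])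
  finally show ?thesis .
qed

lemma W2_app: assumes j: "j < N"
  shows "W2 (fsl @ [ff j]) x t = tauv N k (ev x t) * ph j x t"
proof -
  define e where "e = ev x t"
  define z where "z = solv N k e (\<lambda>r. if r = j then 1 else 0)"
  define A where "A = mat (Suc N) (Suc N) (\<lambda>(r,c). if c < N then (if r < N then Mf k e r c else e c) else (if r = N then 1 else 0))"
  define xv where "xv = vec (Suc N) (\<lambda>c. if c < N then (if c = j then 1 else 0) - z c else (\<Sum>c<N. e c * z c))"
  have Ac: "A \<in> carrier_mat (Suc N) (Suc N)" by (simp add: A_def)
  have xc: "xv \<in> carrier_vec (Suc N)" by (simp add: xv_def)
  have Mz: "Mv N k e z r = (if r = j then 1 else 0)" if "r < N" for r
    unfolding z_def by (rule Mv_solv[where N=N and k=k, OF kpos that])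
  have Mph: "Mv N k e (\<lambda>c. ph c x t) r = e r" if "r < N" for r
    unfolding ph_def e_def by (rule Mv_solv[where N=N and k=k, OF kpos that])
  have detA: "det A = tauv N k e"
  proof -
    have "det A = (\<Sum>i<Suc N. A $$ (i, N) * cofactor A i N)"
      by (rule laplace_expansion_column[OF Ac]) simp
    also have "\<dots> = cofactor A N N"
      by (simp add: A_def)
    also have "\<dots> = det (mat_delete A N N)" by (simp add: cofactor_def)
    also have "mat_delete A N N = MM N k e"
      by (rule eq_matI) (auto simp: mat_delete_def A_def MM_def)
    finally show ?thesis by (simp add: tauv_def)
  qed
  have Ax: "A *\<^sub>v xv = vec (Suc N) (\<lambda>r. if r < N then e r * e j / (k r + k j) else e j)"
  proof (rule eq_vecI)
    fix r assume "r < dim_vec (vec (Suc N) (\<lambda>r. if r < N then e r * e j / (k r + k j) else e j))"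
    then have r: "r < Suc N" by simp
    have "(A *\<^sub>v xv) $ r = (\<Sum>c<Suc N. A $$ (r,c) * xv $ c)" by (rule mat_vec_sum[OF Ac xc r])
    also have "\<dots> = (\<Sum>c<N. A $$ (r,c) * xv $ c) + A $$ (r,N) * xv $ N" by simp
    also have "\<dots> = (if r < N then e r * e j / (k r + k j) else e j)"
    proof (cases "r < N")
      case True
      have "(\<Sum>c<N. A $$ (r,c) * xv $ c) = (\<Sum>c<N. Mf k e r c * ((if c = j then 1 else 0) - z c))"
        by (rule sum.cong) (use r in \<open>auto simp: A_def xv_def True\<close>)
      also have "\<dots> = Mv N k e (\<lambda>c. if c = j then 1 else 0) r - Mv N k e z r"
        unfolding Mv_def by (simp add: right_diff_distrib sum_subtractf)
      also have "Mv N k e (\<lambda>c. if c = j then 1 else 0) r = Mf k e r j"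
        unfolding Mv_def using j by (simp add: if_distrib cong: if_cong)
      also have "Mf k e r j - Mv N k e z r = e r * e j / (k r + k j)" using Mz[OF True] by (simp add: Mf_def)
      finally show ?thesis using True by (simp add: A_def)
    next
      case False
      then have rN: "r = N" using r by simp
      have "(\<Sum>c<N. A $$ (r,c) * xv $ c) = (\<Sum>c<N. e c * ((if c = j then 1 else 0) - z c))"
        by (rule sum.cong) (use r in \<open>auto simp: A_def xv_def rN\<close>)
      also have "\<dots> = e j - (\<Sum>c<N. e c * z c)"
      proof -
        have "(\<Sum>c<N. e c * ((if c = j then 1 else 0) - z c)) = (\<Sum>c<N. (if c = j then e c else 0)) - (\<Sum>c<N. e c * z c)"
          unfolding sum_subtractf[symmetric] by (rule sum.cong) (auto simp: algebra_simps)
        then show ?thesis using j by simp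
      qed
      finally show ?thesis using rN by (simp add: A_def xv_def)
    qed
    finally show "(A *\<^sub>v xv) $ r = vec (Suc N) (\<lambda>r. if r < N then e r * e j / (k r + k j) else e j) $ r"
      using r by simp
  qed (simp add: A_def)
  have cr: "det (replace_col A (A *\<^sub>v xv) N) = xv $ N * det A" by (rule cramer_lemma_mat[OF Ac xc]) simp
  have xN: "xv $ N = ph j x t"
  proof -
    have "xv $ N = (\<Sum>c<N. e c * z c)" by (simp add: xv_def)
    also have "\<dots> = (\<Sum>c<N. Mv N k e (\<lambda>c. ph c x t) c * z c)" by (rule sum.cong) (auto simp: Mph)
    also have "\<dots> = (\<Sum>c<N. ph c x t * Mv N k e z c)" by (rule Mv_sym[symmetric])
    also have "\<dots> = (\<Sum>c<N. ph c x t * (if c = j then 1 else 0))" by (rule sum.cong) (auto simp: Mz)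
    also have "\<dots> = ph j x t" using j by (simp add: if_distrib cong: if_cong)
    finally show ?thesis .
  qed
  have len: "length (fsl @ [ff j]) = Suc N" by (simp add: fsl_len)
  have g_lt: "(fsl @ [ff j]) ! c = ff c" if "c < N" for c using that by (simp add: nth_append fsl_len fsl_nth)
  have g_N: "(fsl @ [ff j]) ! N = ff j" using nth_append_length[of fsl "ff j"] by (simp add: fsl_len)
  have "W2 (fsl @ [ff j]) x t = det (replace_col A (A *\<^sub>v xv) N)"
    unfolding W2_def len Ax
  proof (intro arg_cong[where f = det] eq_matI)
    fix r c assume "r < dim_row (replace_col A (vec (Suc N) (\<lambda>r. if r < N then e r * e j / (k r + k j) else e j)) N)"
      "c < dim_col (replace_col A (vec (Suc N) (\<lambda>r. if r < N then e r * e j / (k r + k j) else e j)) N)"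
    then have r: "r < Suc N" and c: "c < Suc N" by (auto simp: replace_col_def A_def)
    show "mat (Suc N) (Suc N) (\<lambda>(i,ja). if i < Suc N - 1 then (if i = ja then 1 else 0) + dinv (\<lambda>y s. ((fsl @ [ff j]) ! i) y s * ((fsl @ [ff j]) ! ja) y s) x t
             else ((fsl @ [ff j]) ! ja) x t) $$ (r, c) =
          replace_col A (vec (Suc N) (\<lambda>r. if r < N then e r * e j / (k r + k j) else e j)) N $$ (r, c)"
    proof (cases "c < N")
      case True
      show ?thesis
      proof (cases "r < N")
        case True
        then show ?thesis using \<open>c < N\<close> r c
          by (simp add: replace_col_def A_def g_lt dinv_ff Mf_def e_def ev_def)
      next
        case False
        then have "r = N" using r by simp
        then show ?thesis using \<open>c < N\<close> r c by (simp add: replace_col_def A_def g_lt e_def ev_def)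
      qed
    next
      case False
      then have cN: "c = N" using c by simp
      show ?thesis
      proof (cases "r < N")
        case True
        then show ?thesis using cN r j
          by (simp add: replace_col_def A_def g_lt g_N dinv_ff e_def ev_def)
      next
        case False
        then have "r = N" using r by simp
        then show ?thesis using cN r by (simp add: replace_col_def A_def g_N e_def ev_def)
      qed
    qed
  qed (auto simp: replace_col_def A_def)
  also have "\<dots> = tauv N k (ev x t) * ph j x t" unfolding cr xN detA e_def by simp
  finally show ?thesis .
qed

end

lemma pow_id: "(k::real) * (- (k\<^sup>2)) ^ n = (-1) ^ n * k ^ (2 * n + 1)"
proof -
  have a: "(- (k\<^sup>2)) ^ n = (-1) ^ n * (k\<^sup>2) ^ n" by (rule power_minus)
  have b: "(k\<^sup>2) ^ n = k ^ (2 * n)" by (metis power_mult)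
  have "(- (k\<^sup>2)) ^ n = (-1) ^ n * k ^ (2 * n)" unfolding a b ..
  then show ?thesis by (simp add: mult_ac)
qed

theorem mainTheorem6:
  fixes n N :: nat and \<alpha> :: real and k x0 :: "nat \<Rightarrow> real"
    and f \<phi> :: "nat \<Rightarrow> real \<Rightarrow> real \<Rightarrow> real" and u :: "real \<Rightarrow> real \<Rightarrow> real"
    and fs :: "(real \<Rightarrow> real \<Rightarrow> real) list"
  assumes kpos: "\<And>j. j < N \<Longrightarrow> k j > 0"
    and kdist: "\<And>i j. i < N \<Longrightarrow> j < N \<Longrightarrow> i \<noteq> j \<Longrightarrow> k i \<noteq> k j"
    and f_def: "f = (\<lambda>j x t. exp (k j * x + (-1) ^ n * k j ^ (2 * n + 1) * t - \<alpha> * t / 2 + x0 j))"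
    and fs_def: "fs = map f [0..<N]"
    and u_def: "u = (\<lambda>x t. 2 * dx (dx (\<lambda>y s. ln (W1 fs y s))) x t)"
    and phi_def: "\<phi> = (\<lambda>j x t. W2 (fs @ [f j]) x t / W1 fs x t)"
  shows "(\<forall>j<N. \<forall>x t. \<phi> j x t = W2 (take j fs @ drop (Suc j) fs @ [f j]) x t / W1 fs x t)
     \<and> (\<forall>x t. dt u x t = dx (\<lambda>y s. - 2 * bseq u (n + 2) y s - 2 * \<alpha> * (\<Sum>j<N. (\<phi> j y s)\<^sup>2)) x t)
     \<and> (\<forall>j<N. \<forall>x t. dx (dx (\<phi> j)) x t + (- (k j)\<^sup>2 + u x t) * \<phi> j x t = 0)"
proof -
  define om where "om j = (-1) ^ n * k j ^ (2 * n + 1) - \<alpha> / 2" for j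
  interpret K: ksol N k om x0 by unfold_locales (rule kpos)
  have f_ff: "f = K.ff" unfolding f_def by (intro ext) (simp add: K.ff_def om_def algebra_simps)
  have fs_fsl: "fs = K.fsl" unfolding fs_def K.fsl_def f_ff ..
  have u_uu: "u = K.uu" unfolding u_def fs_fsl using K.u_eq by simp
  have tnz: "tauv N k (K.ev x t) \<noteq> 0" for x t by (rule tau_nonzero[where N=N and k=k]) (rule kpos)
  have phi_ph: "\<phi> j x t = K.ph j x t" if "j < N" for j x t
    unfolding phi_def f_ff fs_fsl K.W2_app[OF that] K.W1_tau using tnz[of x t] by simp
  have phi_fun: "\<phi> j = K.ph j" if "j < N" for j using phi_ph[OF that] by (intro ext)
  have c1: "\<forall>j<N. \<forall>x t. \<phi> j x t = W2 (take j fs @ drop (Suc j) fs @ [f j]) x t / W1 fs x t"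
  proof (intro allI impI)
    fix j x t assume j: "j < N"
    show "\<phi> j x t = W2 (take j fs @ drop (Suc j) fs @ [f j]) x t / W1 fs x t"
      unfolding phi_ph[OF j] f_ff fs_fsl K.W2_perm[OF j] K.W1_tau using tnz[of x t] by simp
  qed
  have c2: "\<forall>x t. dt u x t = dx (\<lambda>y s. - 2 * bseq u (n + 2) y s - 2 * \<alpha> * (\<Sum>j<N. (\<phi> j y s)\<^sup>2)) x t"
  proof (intro allI)
    fix x t
    have b: "bseq u (n + 2) = K.BB n" unfolding u_uu using K.bseq_BB[of n] by simp
    have fn: "(\<lambda>y s. - 2 * bseq u (n + 2) y s - 2 * \<alpha> * (\<Sum>j<N. (\<phi> j y s)\<^sup>2)) =
        (\<lambda>y s. \<Sum>i<N. (4 * om i) * (K.ph i y s)\<^sup>2)"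
    proof (intro ext)
      fix y s
      have "- 2 * K.BB n y s - 2 * \<alpha> * (\<Sum>j<N. (\<phi> j y s)\<^sup>2)
          = (\<Sum>i<N. (- 2 * (-2 * k i * (- (k i)\<^sup>2) ^ n) - 2 * \<alpha>) * (K.ph i y s)\<^sup>2)"
        unfolding K.BB_def sum_distrib_left sum_subtractf[symmetric]
      proof (rule sum.cong[OF refl])
        fix i assume "i \<in> {..<N}"
        then have "\<phi> i y s = K.ph i y s" using phi_ph by simp
        then show "- 2 * ((-2 * k i * (- (k i)\<^sup>2) ^ n) * (K.ph i y s)\<^sup>2) - 2 * \<alpha> * (\<phi> i y s)\<^sup>2
            = (- 2 * (-2 * k i * (- (k i)\<^sup>2) ^ n) - 2 * \<alpha>) * (K.ph i y s)\<^sup>2"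
          by (simp only: left_diff_distrib mult.assoc)
      qed
      also have "\<dots> = (\<Sum>i<N. (4 * om i) * (K.ph i y s)\<^sup>2)"
      proof (rule sum.cong[OF refl])
        fix i
        have "- 2 * (-2 * k i * (- (k i)\<^sup>2) ^ n) - 2 * \<alpha> = 4 * (k i * (- (k i)\<^sup>2) ^ n) - 2 * \<alpha>"
          by simp
        also have "\<dots> = 4 * om i" unfolding pow_id om_def by (simp add: right_diff_distrib)
        finally show "(- 2 * (-2 * k i * (- (k i)\<^sup>2) ^ n) - 2 * \<alpha>) * (K.ph i y s)\<^sup>2 = (4 * om i) * (K.ph i y s)\<^sup>2"
          by simp
      qed
      finally show "- 2 * bseq u (n + 2) y s - 2 * \<alpha> * (\<Sum>j<N. (\<phi> j y s)\<^sup>2) = (\<Sum>i<N. (4 * om i) * (K.ph i y s)\<^sup>2)"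
        unfolding b .
    qed
    show "dt u x t = dx (\<lambda>y s. - 2 * bseq u (n + 2) y s - 2 * \<alpha> * (\<Sum>j<N. (\<phi> j y s)\<^sup>2)) x t"
      unfolding fn unfolding u_uu K.dt_uu K.dx_om ..
  qed
  have c3: "\<forall>j<N. \<forall>x t. dx (dx (\<phi> j)) x t + (- (k j)\<^sup>2 + u x t) * \<phi> j x t = 0"
  proof (intro allI impI)
    fix j x t assume j: "j < N"
    have d1: "dx (K.ph j) = K.phx j"
      unfolding dx_def by (intro ext DERIV_imp_deriv K.ph_dx j)
    have d2: "dx (K.phx j) x t = ((k j)\<^sup>2 - K.uu x t) * K.ph j x t"
      unfolding dx_def by (intro DERIV_imp_deriv K.phx_dx j)
    show "dx (dx (\<phi> j)) x t + (- (k j)\<^sup>2 + u x t) * \<phi> j x t = 0"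
      unfolding phi_fun[OF j] d1 d2 u_uu by (simp add: algebra_simps)
  qed
  show ?thesis using c1 c2 c3 by blast
qed

end
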